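(* Let $\beta\in(-1,\frac12)$ and $\delta=2\beta+1$. Then as $T\to\infty$, $$\int_{0\le x\le z\le T}e^{x-z}x^{\beta}z^{\beta}\,\mathrm{d}x\,\mathrm{d}z=\begin{cases}\log T+2\log2+\gamma-\frac{1}{2T}-\frac{3}{8T^2}+O(T^{-3}),&\beta=-\frac12,\\[4pt] -\frac{\Gamma^2(1+\beta)}{2\cos(\beta\pi)}+\frac{T^{\delta}}{\delta}-\frac12T^{\delta-1}+\frac{\beta(\beta-1)}{\delta-2}T^{\delta-2}-\frac{\beta(\beta-2)}{2}T^{\delta-3}+O(T^{\delta-4}),&\beta\neq-\frac12,\end{cases}$$ where $\gamma$ is Euler's constant.
   Context: $g(T)=O(\phi(T))$ means $|g(T)|\le M\phi(T)$ for all sufficiently large $T$, for some constant $M$. *)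

theory Defs
  imports "HOL-Analysis.Analysis" "HOL-Library.Landau_Symbols"
begin

definition tri_integral :: "real \<Rightarrow> real \<Rightarrow> real" where
  "tri_integral \<beta> T =
     set_lebesgue_integral lborel {(x, z). 0 \<le> x \<and> x \<le> z \<and> z \<le> T}
       (\<lambda>(x, z). exp (x - z) * x powr \<beta> * z powr \<beta>)"

end

theory Submission
  imports Defs "HOL-Real_Asymp.Real_Asymp"
begin


lemma HK2L:
  fixes f :: "real \<Rightarrow> real"
  assumes "(f has_integral I) A" "\<And>x. x \<in> A \<Longrightarrow> 0 \<le> f x" "A \<in> sets borel"
    "f \<in> borel_measurable borel"
  shows "integrable lborel (\<lambda>x. indicator A x * f x)" "(\<integral>x. indicator A x * f x \<partial>lborel) = I"
proof -
  have nn: "(\<integral>\<^sup>+ x. ennreal (indicator A x * f x) \<partial>lborel) = ennreal I"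
    by (rule nn_integral_has_integral_lebesgue) (use assms in auto)
  have "I \<ge> 0" using has_integral_nonneg[OF assms(1)] assms(2) by auto
  have m: "(\<lambda>x. indicator A x * f x) \<in> borel_measurable lborel"
    using assms(3,4) by measurable
  have "integrable lborel (\<lambda>x. indicator A x * f x) \<and> (\<integral>x. indicator A x * f x \<partial>lborel) = I"
    by (rule nn_integral_eq_integrable[THEN iffD1, OF m _ \<open>I \<ge> 0\<close> nn])
       (auto intro!: AE_I2 simp: indicator_def assms(2))
  then show "integrable lborel (\<lambda>x. indicator A x * f x)" "(\<integral>x. indicator A x * f x \<partial>lborel) = I"
    by auto
qed

lemma powr_head:
  fixes p T :: real
  assumes "p > -1" "T \<ge> 0"
  shows "integrable lborel (\<lambda>z. indicator {0<..T} z * z powr p)"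
        "(\<integral>z. indicator {0<..T} z * z powr p \<partial>lborel) = T powr (p+1) / (p+1)"
proof -
  have eq: "indicator {0<..T} z * z powr p = indicator {0..T} z * z powr p" for z :: real
    by (auto simp: indicator_def)
  note h = HK2L[OF has_integral_powr_from_0[OF assms]]
  show "integrable lborel (\<lambda>z. indicator {0<..T} z * z powr p)"
       "(\<integral>z. indicator {0<..T} z * z powr p \<partial>lborel) = T powr (p+1) / (p+1)"
    unfolding eq by (rule h; auto)+
qed

lemma powr_tail:
  fixes p T :: real
  assumes "p < -1" "T > 0"
  shows "integrable lborel (\<lambda>z. indicator {T<..} z * z powr p)"
        "(\<integral>z. indicator {T<..} z * z powr p \<partial>lborel) = - (T powr (p+1)) / (p+1)"
proof -
  have hi: "((\<lambda>z. z powr p) has_integral - (T powr (p+1)) / (p+1)) {T<..}"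
  proof -
    have "((\<lambda>z. z powr p) has_integral - (T powr (p+1)) / (p+1)) {T..}"
      by (rule has_integral_powr_to_inf) (use assms in auto)
    moreover have "negligible {x \<in> {T..} - {T<..}. x powr p \<noteq> 0}"
      by (rule negligible_subset[of "{T}"]) auto
    moreover have "negligible {x \<in> {T<..} - {T..}. x powr p \<noteq> 0}"
      by (rule negligible_subset[of "{}"]) auto
    ultimately show ?thesis
      using has_integral_spike_set_eq[of "{T..}" "{T<..}" "\<lambda>z. z powr p"] by blast
  qed
  note h = HK2L[OF hi]
  show "integrable lborel (\<lambda>z. indicator {T<..} z * z powr p)"
       "(\<integral>z. indicator {T<..} z * z powr p \<partial>lborel) = - (T powr (p+1)) / (p+1)"
    by (rule h; use assms in auto)+
qed

definition h0 :: "real \<Rightarrow> real \<Rightarrow> real" where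
  "h0 b t = (if 0 < t \<and> t < 1 then (1 - t) powr b else 0)"

lemma h0_nonneg: "h0 b t \<ge> 0" by (auto simp: h0_def)

lemma h0_measurable [measurable]: "h0 b \<in> borel_measurable borel"
  unfolding h0_def by measurable

lemma LBeta:
  fixes p b :: real
  assumes "p > -1" "b > -1"
  shows "integrable lborel (\<lambda>t. t powr p * h0 b t)"
        "(\<integral>t. t powr p * h0 b t \<partial>lborel) = Beta (p+1) (b+1)"
proof -
  have eq: "t powr p * h0 b t = indicator {0..1} t *\<^sub>R (t powr (p+1-1) * (1-t) powr (b+1-1))" for t
    by (auto simp: h0_def indicator_def)
  have si: "set_integrable lborel {0..1} (\<lambda>t. t powr (p+1-1) * (1-t) powr (b+1-1))"
    by (rule integrable_Beta) (use assms in auto)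
  then show "integrable lborel (\<lambda>t. t powr p * h0 b t)"
    unfolding eq set_integrable_def .
  have "(\<integral>t. t powr p * h0 b t \<partial>lborel) = integral {0..1} (\<lambda>t. t powr (p+1-1) * (1-t) powr (b+1-1))"
    unfolding eq using set_borel_integral_eq_integral[OF si] by (simp add: set_lebesgue_integral_def)
  also have "\<dots> = Beta (p+1) (b+1)"
    by (rule integral_unique, rule has_integral_Beta_real) (use assms in auto)
  finally show "(\<integral>t. t powr p * h0 b t \<partial>lborel) = Beta (p+1) (b+1)" .
qed

lemma LG_nn:
  fixes w t :: real
  assumes "w > 0" "t > 0"
  shows "(\<integral>\<^sup>+z. ennreal (indicator {0<..} z * z powr (w-1) * exp (-(z*t))) \<partial>lborel)
         = ennreal (Gamma w * t powr (-w))"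
proof -
  define g where "g = (\<lambda>u::real. ennreal (indicator {0..} u * u powr (w - 1) / exp u))"
  have gm: "g \<in> borel_measurable borel" unfolding g_def by measurable
  have "ennreal (Gamma w) = (\<integral>\<^sup>+u. g u \<partial>lborel)"
    unfolding g_def by (rule Gamma_conv_nn_integral_real[OF assms(1)])
  also have "\<dots> = ennreal \<bar>t\<bar> * (\<integral>\<^sup>+z. g (0 + t * z) \<partial>lborel)"
    by (rule nn_integral_real_affine[OF gm]) (use assms in auto)
  also have "(\<lambda>z. g (0 + t * z)) = (\<lambda>z. ennreal (t powr (w-1)) *
        ennreal (indicator {0<..} z * z powr (w-1) * exp (-(z*t))))"
  proof
    fix z :: real
    show "g (0 + t * z) = ennreal (t powr (w-1)) * ennreal (indicator {0<..} z * z powr (w-1) * exp (-(z*t)))"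
    proof (cases "z > 0")
      case True
      then show ?thesis using assms
        by (auto simp: g_def indicator_def powr_mult exp_minus field_simps ennreal_mult'[symmetric])
    next
      case False
      then have "z = 0 \<or> z < 0" by auto
      then show ?thesis using assms
        by (auto simp: g_def indicator_def zero_le_mult_iff)
    qed
  qed
  also have "(\<integral>\<^sup>+z. ennreal (t powr (w-1)) * ennreal (indicator {0<..} z * z powr (w-1) * exp (-(z*t))) \<partial>lborel)
      = ennreal (t powr (w-1)) * (\<integral>\<^sup>+z. ennreal (indicator {0<..} z * z powr (w-1) * exp (-(z*t))) \<partial>lborel)"
    by (rule nn_integral_cmult) measurable
  finally have eq: "ennreal (Gamma w) = ennreal (t * t powr (w-1)) *
      (\<integral>\<^sup>+z. ennreal (indicator {0<..} z * z powr (w-1) * exp (-(z*t))) \<partial>lborel)"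
    using assms by (simp add: ennreal_mult' mult.assoc)
  have tw: "t * t powr (w-1) = t powr w" using assms by (simp add: powr_diff field_simps powr_minus)
  have "ennreal (t powr (-w)) * ennreal (Gamma w) =
      (\<integral>\<^sup>+z. ennreal (indicator {0<..} z * z powr (w-1) * exp (-(z*t))) \<partial>lborel)"
    unfolding eq tw mult.assoc[symmetric]
    using assms by (simp add: ennreal_mult'[symmetric] powr_minus)
  then show ?thesis using assms Gamma_real_pos[of w]
    by (simp add: ennreal_mult'[symmetric] mult.commute)
qed

lemma LG:
  fixes w t :: real
  assumes "w > 0" "t > 0"
  shows "integrable lborel (\<lambda>z. indicator {0<..} z * z powr (w-1) * exp (-(z*t)))"
        "(\<integral>z. indicator {0<..} z * z powr (w-1) * exp (-(z*t)) \<partial>lborel) = Gamma w * t powr (-w)"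
proof -
  have m: "(\<lambda>z. indicator {0<..} z * z powr (w-1) * exp (-(z*t))) \<in> borel_measurable lborel"
    by measurable
  have "0 \<le> Gamma w * t powr (-w)" using assms Gamma_real_pos[of w] by auto
  from nn_integral_eq_integrable[THEN iffD1, OF m _ this LG_nn[OF assms]]
  show "integrable lborel (\<lambda>z. indicator {0<..} z * z powr (w-1) * exp (-(z*t)))"
        "(\<integral>z. indicator {0<..} z * z powr (w-1) * exp (-(z*t)) \<partial>lborel) = Gamma w * t powr (-w)"
    by (auto intro!: AE_I2 simp: indicator_def)
qed

lemma Gamma_reflection_real:
  fixes x :: real
  shows "Gamma x * Gamma (1 - x) = pi / sin (pi * x)"
proof -
  have "complex_of_real (Gamma x * Gamma (1 - x)) = Gamma (complex_of_real x) * Gamma (1 - complex_of_real x)"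
    by (simp add: Gamma_complex_of_real[symmetric])
  also have "\<dots> = of_real pi / sin (of_real pi * of_real x)"
    by (rule Gamma_reflection_complex)
  also have "\<dots> = complex_of_real (pi / sin (pi * x))"
    by (simp flip: sin_of_real)
  finally show ?thesis by (simp only: of_real_eq_iff)
qed


lemma h0_integrable: "b > -1 \<Longrightarrow> integrable lborel (h0 b)"
proof -
  assume b: "b > -1"
  have "(\<lambda>t. t powr 0 * h0 b t) = h0 b" by (auto simp: h0_def)
  then show ?thesis using LBeta(1)[of 0 b] b by simp
qed

definition phi :: "real \<Rightarrow> real \<Rightarrow> real" where
  "phi b z = (\<integral>t. exp (-(z*t)) * h0 b t \<partial>lborel)"

lemma phi_integrable:
  assumes "b > -1" "z \<ge> 0"
  shows "integrable lborel (\<lambda>t. exp (-(z*t)) * h0 b t)"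
proof (rule Bochner_Integration.integrable_bound[OF h0_integrable[OF assms(1)]])
  show "(\<lambda>t. exp (-(z*t)) * h0 b t) \<in> borel_measurable lborel" by measurable
  show "AE t in lborel. norm (exp (-(z*t)) * h0 b t) \<le> norm (h0 b t)"
  proof (rule AE_I2)
    fix t
    show "norm (exp (-(z*t)) * h0 b t) \<le> norm (h0 b t)"
    proof (cases "0 < t \<and> t < 1")
      case True
      then have "exp (-(z*t)) \<le> 1" using assms by auto
      then show ?thesis using h0_nonneg[of b t] by (auto intro: mult_left_le_one_le)
    qed (auto simp: h0_def)
  qed
qed

lemma phi_nonneg: "phi b z \<ge> 0"
  unfolding phi_def by (rule integral_nonneg_AE) (auto intro!: AE_I2 h0_nonneg mult_nonneg_nonneg)

lemma mellin:
  fixes k :: "real \<Rightarrow> real" and w :: real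
  assumes w: "w > 0" and km[measurable]: "k \<in> borel_measurable borel"
    and k0: "\<And>t. t \<le> 0 \<Longrightarrow> k t = 0"
    and ki: "integrable lborel (\<lambda>t. t powr (-w) * k t)"
  shows "integrable lborel (\<lambda>z. indicator {0<..} z * z powr (w-1) * (\<integral>t. exp(-(z*t)) * k t \<partial>lborel))"
    "(\<integral>z. indicator {0<..} z * z powr (w-1) * (\<integral>t. exp(-(z*t)) * k t \<partial>lborel) \<partial>lborel)
       = Gamma w * (\<integral>t. t powr (-w) * k t \<partial>lborel)"
proof -
  define F where "F = (\<lambda>z t. indicator {0<..} z * z powr (w-1) * exp(-(z*t)) * k t)"
  have Fm: "(\<lambda>(z,t). F z t) \<in> borel_measurable (lborel \<Otimes>\<^sub>M lborel)"
    unfolding F_def by measurable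
  have inner_nn: "(\<integral>\<^sup>+z. ennreal (norm (F z t)) \<partial>lborel) = ennreal (Gamma w * norm (t powr (-w) * k t))" for t
  proof (cases "t > 0")
    case True
    have "(\<integral>\<^sup>+z. ennreal (norm (F z t)) \<partial>lborel) =
        (\<integral>\<^sup>+z. ennreal \<bar>k t\<bar> * ennreal (indicator {0<..} z * z powr (w-1) * exp (-(z*t))) \<partial>lborel)"
      by (intro nn_integral_cong) (auto simp: F_def indicator_def abs_mult ennreal_mult'[symmetric] mult_ac)
    also have "\<dots> = ennreal \<bar>k t\<bar> * (\<integral>\<^sup>+z. ennreal (indicator {0<..} z * z powr (w-1) * exp (-(z*t))) \<partial>lborel)"
      by (rule nn_integral_cmult) measurable
    also have "\<dots> = ennreal \<bar>k t\<bar> * ennreal (Gamma w * t powr (-w))"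
      by (simp add: LG_nn[OF w True])
    also have "\<dots> = ennreal (Gamma w * norm (t powr (-w) * k t))"
      using True w Gamma_real_pos[of w] by (simp add: ennreal_mult'[symmetric] abs_mult mult_ac)
    finally show ?thesis .
  next
    case False
    then show ?thesis by (simp add: F_def k0)
  qed
  have "integrable (lborel \<Otimes>\<^sub>M lborel) (\<lambda>(z,t). F z t)"
  proof (subst integrable_iff_bounded, intro conjI)
    show "(\<lambda>(z,t). F z t) \<in> borel_measurable (lborel \<Otimes>\<^sub>M lborel)" by (rule Fm)
    have "(\<integral>\<^sup>+x. ennreal (norm ((\<lambda>(z,t). F z t) x)) \<partial>(lborel \<Otimes>\<^sub>M lborel)) =
        (\<integral>\<^sup>+t. \<integral>\<^sup>+z. ennreal (norm (F z t)) \<partial>lborel \<partial>lborel)"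
      by (subst lborel_pair.nn_integral_snd[symmetric]) (use Fm in auto)
    also have "\<dots> = (\<integral>\<^sup>+t. ennreal (Gamma w * norm (t powr (-w) * k t)) \<partial>lborel)"
      using inner_nn by (simp del: real_norm_def)
    also have "\<dots> = ennreal (Gamma w) * (\<integral>\<^sup>+t. ennreal (norm (t powr (-w) * k t)) \<partial>lborel)"
      using w Gamma_real_pos[of w]
      by (subst nn_integral_cmult[symmetric]) (auto simp: ennreal_mult')
    also have "\<dots> < \<infinity>" using ki by (simp add: integrable_iff_bounded ennreal_mult_less_top)
    finally show "(\<integral>\<^sup>+x. ennreal (norm ((\<lambda>(z,t). F z t) x)) \<partial>(lborel \<Otimes>\<^sub>M lborel)) < \<infinity>" .
  qed
  note Fi = this
  have eqz: "(\<lambda>z. \<integral>t. F z t \<partial>lborel) = (\<lambda>z. indicator {0<..} z * z powr (w-1) * (\<integral>t. exp(-(z*t)) * k t \<partial>lborel))"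
    by (rule ext) (simp add: F_def mult.assoc)
  show "integrable lborel (\<lambda>z. indicator {0<..} z * z powr (w-1) * (\<integral>t. exp(-(z*t)) * k t \<partial>lborel))"
    using lborel_pair.integrable_fst[OF Fi] unfolding eqz .
  have eqt: "(\<integral>z. F z t \<partial>lborel) = Gamma w * (t powr (-w) * k t)" for t
  proof (cases "t > 0")
    case True
    have "(\<integral>z. F z t \<partial>lborel) = k t * (\<integral>z. indicator {0<..} z * z powr (w-1) * exp(-(z*t)) \<partial>lborel)"
      by (simp add: F_def mult_ac)
    also have "\<dots> = Gamma w * (t powr (-w) * k t)" using LG(2)[OF w True] by simp
    finally show ?thesis .
  qed (simp add: F_def k0)
  have "(\<integral>z. \<integral>t. F z t \<partial>lborel \<partial>lborel) = (\<integral>t. \<integral>z. F z t \<partial>lborel \<partial>lborel)"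
    using lborel_pair.Fubini_integral[OF Fi] by simp
  also have "\<dots> = Gamma w * (\<integral>t. t powr (-w) * k t \<partial>lborel)" by (simp add: eqt)
  finally show "(\<integral>z. indicator {0<..} z * z powr (w-1) * (\<integral>t. exp(-(z*t)) * k t \<partial>lborel) \<partial>lborel)
       = Gamma w * (\<integral>t. t powr (-w) * k t \<partial>lborel)" unfolding eqz .
qed


lemma phi_measurable [measurable]: "phi b \<in> borel_measurable borel"
  unfolding phi_def by measurable

lemma inner_tri:
  fixes b z :: real
  assumes b: "b > -1" and z: "z > 0"
  shows "(\<integral>\<^sup>+x. ennreal (indicator {0..z} x * (exp (x - z) * x powr b * z powr b)) \<partial>lborel)
       = ennreal (z powr (2*b+1) * phi b z)"
proof -
  define g where "g = (\<lambda>x. ennreal (indicator {0..z} x * (exp (x - z) * x powr b * z powr b)))"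
  have gm: "g \<in> borel_measurable borel" unfolding g_def by measurable
  have "(\<integral>\<^sup>+x. g x \<partial>lborel) = ennreal \<bar>-z\<bar> * (\<integral>\<^sup>+t. g (z + (-z) * t) \<partial>lborel)"
    by (rule nn_integral_real_affine[OF gm]) (use z in auto)
  also have "(\<integral>\<^sup>+t. g (z + (-z) * t) \<partial>lborel) =
      (\<integral>\<^sup>+t. ennreal (z powr (2*b)) * ennreal (exp (-(z*t)) * h0 b t) \<partial>lborel)"
  proof (rule nn_integral_cong_AE)
    show "AE t in lborel. g (z + (-z) * t) = ennreal (z powr (2*b)) * ennreal (exp (-(z*t)) * h0 b t)"
      using AE_lborel_singleton[of 0]
    proof eventually_elim
      case (elim t)
      show ?case
      proof (cases "0 < t \<and> t < 1")
        case True
        have "z + (-z) * t = z * (1 - t)" by (simp add: algebra_simps)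
        moreover have "(z * (1 - t)) powr b = z powr b * (1 - t) powr b"
          using True z by (simp add: powr_mult)
        moreover have "z powr (2*b) = z powr b * z powr b"
          using z by (simp add: powr_add[symmetric])
        moreover have "z * (1 - t) \<le> z" "0 \<le> z * (1 - t)" using True z by auto
        ultimately show ?thesis using True z
          by (auto simp: g_def h0_def indicator_def ennreal_mult'[symmetric] algebra_simps)
      next
        case False
        then have "t \<le> 0 \<or> t \<ge> 1" by auto
        then have "t < 0 \<or> t = 1 \<or> t > 1" using elim by auto
        then show ?thesis
        proof (elim disjE)
          assume "t < 0"
          then have "z + (-z) * t > z" using mult_pos_neg[OF z \<open>t < 0\<close>] by linarith
          then show ?thesis using \<open>t < 0\<close> by (simp add: g_def h0_def indicator_def)
        next
          assume "t = 1" then show ?thesis by (auto simp: g_def h0_def indicator_def)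
        next
          assume "t > 1"
          then have "z + (-z) * t < 0" using z
            by (smt (verit) mult_less_cancel_left2)
          then show ?thesis using \<open>t > 1\<close> by (simp add: g_def h0_def indicator_def)
        qed
      qed
    qed
  qed
  also have "\<dots> = ennreal (z powr (2*b)) * (\<integral>\<^sup>+t. ennreal (exp (-(z*t)) * h0 b t) \<partial>lborel)"
    by (rule nn_integral_cmult) measurable
  also have "(\<integral>\<^sup>+t. ennreal (exp (-(z*t)) * h0 b t) \<partial>lborel) = ennreal (phi b z)"
    unfolding phi_def
    by (rule nn_integral_eq_integral[OF phi_integrable[OF b]]) (use z in \<open>auto intro!: AE_I2 h0_nonneg mult_nonneg_nonneg\<close>)
  finally have "(\<integral>\<^sup>+x. g x \<partial>lborel) = ennreal (z * z powr (2*b) * phi b z)"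
    using z by (simp add: ennreal_mult'[symmetric] phi_nonneg mult.assoc)
  also have "z * z powr (2*b) = z powr (2*b+1)" using z by (simp add: powr_add)
  finally show ?thesis unfolding g_def .
qed

lemma tri_repr:
  fixes b T :: real
  assumes b: "b > -1"
  shows "tri_integral b T = (\<integral>z. indicator {0<..T} z * (z powr (2*b+1) * phi b z) \<partial>lborel)"
proof -
  define S where "S = {(x::real, z::real). 0 \<le> x \<and> x \<le> z \<and> z \<le> T}"
  define f where "f = (\<lambda>(x::real, z::real). exp (x - z) * x powr b * z powr b)"
  have Sm: "S \<in> sets (lborel \<Otimes>\<^sub>M lborel)"
  proof -
    have "S = {p\<in>space (lborel \<Otimes>\<^sub>M lborel). 0 \<le> fst p \<and> fst p \<le> snd p \<and> snd p \<le> T}"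
      by (auto simp: S_def space_pair_measure)
    also have "\<dots> \<in> sets (lborel \<Otimes>\<^sub>M lborel)" by measurable
    finally show ?thesis .
  qed
  have "tri_integral b T = (\<integral>p. indicator S p * f p \<partial>(lborel :: (real \<times> real) measure))"
    unfolding tri_integral_def set_lebesgue_integral_def S_def f_def by simp
  also have "\<dots> = (\<integral>p. indicator S p * f p \<partial>(lborel \<Otimes>\<^sub>M lborel))"
    by (simp add: lborel_prod)
  also have "\<dots> = enn2real (\<integral>\<^sup>+p. ennreal (indicator S p * f p) \<partial>(lborel \<Otimes>\<^sub>M lborel))"
    by (rule integral_eq_nn_integral) (use Sm in \<open>auto simp: f_def intro!: AE_I2\<close>)
  also have "(\<integral>\<^sup>+p. ennreal (indicator S p * f p) \<partial>(lborel \<Otimes>\<^sub>M lborel)) =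
      (\<integral>\<^sup>+z. \<integral>\<^sup>+x. ennreal (indicator S (x,z) * f (x,z)) \<partial>lborel \<partial>lborel)"
    by (rule lborel_pair.nn_integral_snd[symmetric]) (use Sm in \<open>simp add: f_def\<close>)
  also have "\<dots> = (\<integral>\<^sup>+z. ennreal (indicator {0<..T} z * (z powr (2*b+1) * phi b z)) \<partial>lborel)"
  proof (rule nn_integral_cong)
    fix z :: real
    show "(\<integral>\<^sup>+x. ennreal (indicator S (x,z) * f (x,z)) \<partial>lborel) =
          ennreal (indicator {0<..T} z * (z powr (2*b+1) * phi b z))"
    proof (cases "0 < z \<and> z \<le> T")
      case True
      have "(\<lambda>x. ennreal (indicator S (x,z) * f (x,z))) =
            (\<lambda>x. ennreal (indicator {0..z} x * (exp (x - z) * x powr b * z powr b)))"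
        using True by (auto simp: S_def f_def indicator_def fun_eq_iff)
      then show ?thesis using inner_tri[OF b, of z] True by simp
    next
      case False
      have "(\<lambda>x. ennreal (indicator S (x,z) * f (x,z))) = (\<lambda>x. 0)"
        using False by (auto simp: S_def f_def indicator_def fun_eq_iff)
      then show ?thesis using False by simp
    qed
  qed
  also have "enn2real \<dots> = (\<integral>z. indicator {0<..T} z * (z powr (2*b+1) * phi b z) \<partial>lborel)"
    by (rule integral_eq_nn_integral[symmetric]) (auto intro!: AE_I2 phi_nonneg mult_nonneg_nonneg)
  finally show ?thesis .
qed


lemma bigo_right0_bound:
  fixes f g :: "real \<Rightarrow> real"
  assumes "f \<in> O[at_right 0](g)"
  shows "\<exists>e K. 0 < e \<and> e < 1 \<and> K > 0 \<and> (\<forall>t. 0 < t \<and> t \<le> e \<longrightarrow> \<bar>f t\<bar> \<le> K * \<bar>g t\<bar>)"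
proof -
  obtain c where c: "c > 0" "eventually (\<lambda>x. norm (f x) \<le> c * norm (g x)) (at_right 0)"
    using assms by (elim landau_o.bigE)
  then obtain b where b: "b > 0" "\<forall>y>0. y < b \<longrightarrow> norm (f y) \<le> c * norm (g y)"
    unfolding eventually_at_right_field by auto
  show ?thesis
    by (rule exI[of _ "min (b/2) (1/2)"], rule exI[of _ c]) (use b c in auto)
qed

lemma lap:
  fixes z :: real and k :: nat
  assumes "z > 0"
  shows "integrable lborel (\<lambda>t. indicator {0<..} t * t ^ k * exp (-(z*t)))"
        "(\<integral>t. indicator {0<..} t * t ^ k * exp (-(z*t)) \<partial>lborel) = fact k / z ^ (k+1)"
proof -
  have eq: "(\<lambda>t. indicator {0<..} t * t ^ k * exp (-(z*t))) =
            (\<lambda>t. indicator {0<..} t * t powr (real k + 1 - 1) * exp (-(t*z)))"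
    by (auto simp: fun_eq_iff indicator_def powr_realpow mult.commute)
  have kp: "real k + 1 > 0" by simp
  show "integrable lborel (\<lambda>t. indicator {0<..} t * t ^ k * exp (-(z*t)))"
    unfolding eq by (rule LG(1)[OF kp assms])
  have "Gamma (real k + 1) = fact k" using Gamma_fact[of k] by (simp add: add.commute)
  moreover have "z powr (-(real k + 1)) = 1 / z ^ (k+1)"
  proof -
    have "z powr (real k + 1) = z ^ (k+1)" using powr_realpow[OF assms, of "k+1"] by (simp add: add.commute)
    then show ?thesis using powr_minus[of z "real k + 1"] by (simp add: divide_inverse)
  qed
  ultimately show "(\<integral>t. indicator {0<..} t * t ^ k * exp (-(z*t)) \<partial>lborel) = fact k / z ^ (k+1)"
    unfolding eq LG(2)[OF kp assms] by simp
qed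

lemma exp_neg_bound:
  fixes x :: real assumes "x > 0"
  shows "exp (-x) \<le> (5 / x) ^ 5"
proof -
  have "(x/5) ^ 5 \<le> (1 + x / real (5::nat)) ^ 5"
    using assms by (intro power_mono) auto
  also have "\<dots> \<le> exp x" by (rule exp_ge_one_plus_x_over_n_power_n) (use assms in auto)
  finally have "(x/5)^5 \<le> exp x" .
  then have "1 / exp x \<le> 1 / (x/5)^5" using assms by (intro divide_left_mono) auto
  then show ?thesis using assms by (simp add: exp_minus field_simps power_divide)
qed

definition p3 :: "real \<Rightarrow> real \<Rightarrow> real" where
  "p3 b t = 1 - b*t + b*(b-1)/2*t^2 - b*(b-1)*(b-2)/6*t^3"

definition Q :: "real \<Rightarrow> real \<Rightarrow> real" where
  "Q b z = 1/z - b/z^2 + b*(b-1)/z^3 - b*(b-1)*(b-2)/z^4"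

lemma p3_bound:
  assumes "0 < e" "e < 1" "t \<ge> e"
  shows "\<bar>p3 b t\<bar> \<le> ((1 + \<bar>b\<bar> + \<bar>b*(b-1)/2\<bar> + \<bar>b*(b-1)*(b-2)/6\<bar>) / e^4) * t^4"
proof -
  have t0: "t > 0" using assms by auto
  have tj: "t ^ j \<le> t^4 / e^4" if "j \<le> 4" for j :: nat
  proof (cases "t \<ge> 1")
    case True
    have "t ^ j \<le> t ^ 4" using True that by (intro power_increasing) auto
    also have "\<dots> \<le> t^4 / e^4" using assms t0
      by (simp add: le_divide_eq power_le_one mult_le_cancel_left1)
    finally show ?thesis .
  next
    case False
    have "t ^ j \<le> 1" using False t0 by (intro power_le_one) auto
    also have "1 \<le> (t/e)^4" using assms by (intro one_le_power) auto
    finally show ?thesis by (simp add: power_divide)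
  qed
  have "\<bar>p3 b t\<bar> \<le> 1 + \<bar>b\<bar> * t + \<bar>b*(b-1)/2\<bar> * t^2 + \<bar>b*(b-1)*(b-2)/6\<bar> * t^3"
    unfolding p3_def using t0 by (auto simp: abs_mult intro!: abs_triangle_ineq4[THEN order_trans] 
       abs_triangle_ineq[THEN order_trans])
  also have "\<dots> \<le> 1 * (t^4/e^4) + \<bar>b\<bar> * (t^4/e^4) + \<bar>b*(b-1)/2\<bar> * (t^4/e^4) + \<bar>b*(b-1)*(b-2)/6\<bar> * (t^4/e^4)"
    using tj[of 0] tj[of 1] tj[of 2] tj[of 3]
    by (intro add_mono mult_left_mono) auto
  also have "\<dots> = (1 + \<bar>b\<bar> + \<bar>b*(b-1)/2\<bar> + \<bar>b*(b-1)*(b-2)/6\<bar>) * (t^4/e^4)"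
    by (simp only: distrib_right)
  finally show ?thesis by simp
qed


lemma phi_Q_repr:
  fixes b z :: real
  assumes b: "b > -1" and z: "z > 0"
  shows "integrable lborel (\<lambda>t. exp (-(z*t)) * (h0 b t - indicator {0<..} t * p3 b t))"
        "phi b z - Q b z = (\<integral>t. exp (-(z*t)) * (h0 b t - indicator {0<..} t * p3 b t) \<partial>lborel)"
proof -
  define f where "f = (\<lambda>k::nat. \<lambda>t::real. indicator {0<..} t * t ^ k * exp (-(z*t)))"
  have fi: "integrable lborel (f k)" for k unfolding f_def by (rule lap(1)[OF z])
  have fv: "(\<integral>t. f k t \<partial>lborel) = fact k / z^(k+1)" for k unfolding f_def by (rule lap(2)[OF z])
  have eq: "(\<lambda>t. exp (-(z*t)) * (indicator {0<..} t * p3 b t)) =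
     (\<lambda>t. f 0 t - b * f 1 t + (b*(b-1)/2) * f 2 t - (b*(b-1)*(b-2)/6) * f 3 t)"
    by (auto simp: fun_eq_iff f_def p3_def indicator_def algebra_simps power2_eq_square)
  have pi: "integrable lborel (\<lambda>t. exp (-(z*t)) * (indicator {0<..} t * p3 b t))"
    unfolding eq by (intro Bochner_Integration.integrable_diff Bochner_Integration.integrable_add integrable_mult_right fi)
  have pv: "(\<integral>t. exp (-(z*t)) * (indicator {0<..} t * p3 b t) \<partial>lborel) = Q b z"
  proof -
    have "(\<integral>t. exp (-(z*t)) * (indicator {0<..} t * p3 b t) \<partial>lborel) =
       (\<integral>t. f 0 t \<partial>lborel) - b * (\<integral>t. f 1 t \<partial>lborel) + (b*(b-1)/2) * (\<integral>t. f 2 t \<partial>lborel)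
        - (b*(b-1)*(b-2)/6) * (\<integral>t. f 3 t \<partial>lborel)"
      unfolding eq using fi
      by (simp add: Bochner_Integration.integral_diff Bochner_Integration.integral_add
                    Bochner_Integration.integrable_diff Bochner_Integration.integrable_add)
    also have "\<dots> = Q b z" unfolding fv using z
      by (simp add: Q_def field_simps power2_eq_square power3_eq_cube fact_numeral)
    finally show ?thesis .
  qed
  have hi: "integrable lborel (\<lambda>t. exp (-(z*t)) * h0 b t)" by (rule phi_integrable) (use b z in auto)
  have eq2: "(\<lambda>t. exp (-(z*t)) * (h0 b t - indicator {0<..} t * p3 b t)) =
      (\<lambda>t. exp (-(z*t)) * h0 b t - exp (-(z*t)) * (indicator {0<..} t * p3 b t))"
    by (simp add: fun_eq_iff algebra_simps)
  show "integrable lborel (\<lambda>t. exp (-(z*t)) * (h0 b t - indicator {0<..} t * p3 b t))"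
    unfolding eq2 by (intro Bochner_Integration.integrable_diff hi pi)
  show "phi b z - Q b z = (\<integral>t. exp (-(z*t)) * (h0 b t - indicator {0<..} t * p3 b t) \<partial>lborel)"
    unfolding eq2 phi_def using hi pi pv by (simp add: Bochner_Integration.integral_diff)
qed

lemma phi_asym:
  fixes b :: real
  assumes b: "b > -1"
  shows "\<exists>M\<ge>0. \<forall>z>0. \<bar>phi b z - Q b z\<bar> \<le> M / z^5"
proof -
  have "(\<lambda>t. (1 - t) powr b - p3 b t) \<in> O[at_right 0](\<lambda>t. t^4)"
    unfolding p3_def by real_asymp
  from bigo_right0_bound[OF this] obtain e K where eK: "0 < e" "e < 1" "K > 0"
    "\<And>t. 0 < t \<Longrightarrow> t \<le> e \<Longrightarrow> \<bar>(1 - t) powr b - p3 b t\<bar> \<le> K * \<bar>t^4\<bar>" by blast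
  define P where "P = (1 + \<bar>b\<bar> + \<bar>b*(b-1)/2\<bar> + \<bar>b*(b-1)*(b-2)/6\<bar>) / e^4"
  have P0: "P \<ge> 0" unfolding P_def by auto
  define K' where "K' = K + P"
  have K'0: "K' \<ge> 0" using eK P0 by (simp add: K'_def)
  define H where "H = (\<integral>t. h0 b t \<partial>lborel)"
  have H0: "H \<ge> 0" unfolding H_def by (rule integral_nonneg_AE) (auto intro!: AE_I2 h0_nonneg)
  define M where "M = K' * 24 + (5/e)^5 * H"
  have M0: "M \<ge> 0" unfolding M_def using K'0 H0 eK by auto
  have "\<forall>z>0. \<bar>phi b z - Q b z\<bar> \<le> M / z^5"
  proof (intro allI impI)
    fix z :: real assume z: "z > 0"
    define g where "g = (\<lambda>t. K' * (indicator {0<..} t * t ^ 4 * exp (-(z*t))) + exp (-(z*e)) * h0 b t)"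
    have gi: "integrable lborel g" unfolding g_def
      by (intro Bochner_Integration.integrable_add integrable_mult_right lap(1)[OF z] h0_integrable[OF b])
    have gv: "(\<integral>t. g t \<partial>lborel) = K' * 24 / z^5 + exp (-(z*e)) * H"
      unfolding g_def H_def using lap[OF z, of 4] h0_integrable[OF b]
      by (simp add: Bochner_Integration.integral_add fact_numeral)
    have pw: "\<bar>exp (-(z*t)) * (h0 b t - indicator {0<..} t * p3 b t)\<bar> \<le> g t" for t
    proof -
      consider "t \<le> 0" | "0 < t \<and> t \<le> e" | "e < t" by linarith
      then show ?thesis
      proof cases
        case 1
        then show ?thesis using K'0 by (simp add: g_def h0_def indicator_def)
      next
        case 2
        then have t1: "t < 1" using eK by auto
        have "\<bar>(1 - t) powr b - p3 b t\<bar> \<le> K' * t^4"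
          using eK(4)[of t] 2 P0 by (simp add: K'_def distrib_right add_increasing2)
        then have f1: "exp (-(z*t)) * \<bar>(1 - t) powr b - p3 b t\<bar> \<le> K' * (exp (-(z*t)) * t^4)"
          by (simp add: mult_left_mono mult_ac)
        have f2: "0 \<le> exp (-(z*e)) * h0 b t" using h0_nonneg[of b t] by simp
        have f3: "g t = K' * (exp (-(z*t)) * t^4) + exp (-(z*e)) * h0 b t"
          using 2 by (simp add: g_def indicator_def mult_ac)
        have f4: "\<bar>exp (-(z*t)) * (h0 b t - indicator {0<..} t * p3 b t)\<bar>
             = exp (-(z*t)) * \<bar>(1 - t) powr b - p3 b t\<bar>"
          using 2 t1 by (simp add: h0_def indicator_def abs_mult)
        show ?thesis unfolding f3 f4 using f1 f2 by linarith
      next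
        case 3
        then have t0: "t > 0" using eK by auto
        have "\<bar>h0 b t - p3 b t\<bar> \<le> h0 b t + K' * t^4"
        proof -
          have "\<bar>p3 b t\<bar> \<le> P * t^4" unfolding P_def using p3_bound[OF eK(1,2), of t b] 3 by simp
          also have "\<dots> \<le> K' * t^4" using eK by (simp add: K'_def mult_right_mono)
          finally show ?thesis using h0_nonneg[of b t] by linarith
        qed
        then have "exp (-(z*t)) * \<bar>h0 b t - p3 b t\<bar> \<le> exp (-(z*t)) * (h0 b t + K' * t^4)"
          by (intro mult_left_mono) auto
        moreover have "exp (-(z*t)) * h0 b t \<le> exp (-(z*e)) * h0 b t"
          using 3 z h0_nonneg[of b t] by (intro mult_right_mono) auto
        ultimately show ?thesis using t0
          by (simp add: g_def indicator_def abs_mult distrib_left mult_ac)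
      qed
    qed
    have "\<bar>phi b z - Q b z\<bar> \<le> (\<integral>t. g t \<partial>lborel)"
      unfolding phi_Q_repr(2)[OF b z]
      by (rule integral_abs_bound_integral[OF phi_Q_repr(1)[OF b z] gi]) (use pw in auto)
    also have "\<dots> \<le> K' * 24 / z^5 + (5/e)^5 / z^5 * H"
    proof -
      have "exp (-(z*e)) \<le> (5/(z*e))^5" by (rule exp_neg_bound) (use z eK in auto)
      also have "\<dots> = (5/e)^5 / z^5" by (simp add: power_divide field_simps)
      finally show ?thesis unfolding gv using H0 by (intro add_left_mono mult_right_mono) auto
    qed
    also have "\<dots> = M / z^5" using z eK by (simp add: M_def field_simps)
    finally show "\<bar>phi b z - Q b z\<bar> \<le> M / z^5" .
  qed
  then show ?thesis using M0 by blast
qed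



lemma bracket_bigo:
  fixes A B C b :: real
  assumes CB: "C = B - A*(b+1)"
  shows "(\<lambda>t::real. (A + B*t) * (1-t) powr (b+1) - A - C*t) \<in> O[at_right 0](\<lambda>t. t^2)"
proof -
  have X1: "(\<lambda>t::real. (1-t) powr (b+1) - 1 + (b+1)*t) \<in> O[at_right 0](\<lambda>t. t^2)" by real_asymp
  have X2: "(\<lambda>t::real. t*((1-t) powr (b+1) - 1)) \<in> O[at_right 0](\<lambda>t. t^2)" by real_asymp
  have "(\<lambda>t. A * ((1-t) powr (b+1) - 1 + (b+1)*t) + B * (t*((1-t) powr (b+1) - 1)))
          \<in> O[at_right 0](\<lambda>t. t^2)"
    using X1 X2 by (intro sum_in_bigo) simp_all
  also have "(\<lambda>t. A * ((1-t) powr (b+1) - 1 + (b+1)*t) + B * (t*((1-t) powr (b+1) - 1)))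
      = (\<lambda>t. (A + B*t) * (1-t) powr (b+1) - A - C*t)"
    unfolding CB by (rule ext) (simp add: algebra_simps)
  finally show ?thesis .
qed
lemma G_lim1:
  fixes A B C a b :: real
  assumes "b > -1"
  shows "((\<lambda>t::real. t powr a * ((A + B*t) * (1-t) powr (b+1) - A - C*t)) \<longlongrightarrow> -A - C) (at_left 1)"
proof -
  have H: "((\<lambda>t::real. (1-t) powr (b+1)) \<longlongrightarrow> 0) (at_left 1)" using assms by real_asymp
  have P: "((\<lambda>t::real. t powr a) \<longlongrightarrow> 1) (at_left 1)" by real_asymp
  have T: "((\<lambda>t::real. t) \<longlongrightarrow> 1) (at_left 1)" by (rule tendsto_ident_at)
  have "((\<lambda>t::real. t powr a * ((A + B*t) * (1-t) powr (b+1) - A - C*t)) \<longlongrightarrow> 1 * ((A + B*1) * 0 - A - C*1)) (at_left 1)"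
    by (intro tendsto_mult tendsto_diff tendsto_add P H T tendsto_const)
  then show ?thesis by simp
qed

lemma Kalg:
  fixes a b t X Y A B C c :: real
  assumes a: "a \<noteq> 0" "a + 1 \<noteq> 0"
    and AA: "A = 1/a" and BB: "B = (a+b+1)/(a*(a+1))" and CC: "C = -b/(a+1)"
    and cc: "c = (a+b+1)*(a+b+2)/(a*(a+1))"
  shows "(a * X) * ((A + B*t) * ((1-t) * Y) - A - C*t) +
        (t * X) * (B * ((1-t) * Y) + (A + B*t) * (-((b+1) * Y)) - C) = X * (Y - 1 + b*t) - c * (t * t * X * Y)"
proof -
  have "a * (A + B*t) * (1-t) + t*B*(1-t) - (b+1)*t*(A+B*t) = 1 - c*t*t"
    using a unfolding AA BB cc by (simp add: divide_simps) (simp add: algebra_simps)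
  moreover have "- a*A - (a+1)*C*t = -1 + b*t"
    using a unfolding AA CC by (simp add: divide_simps)
  ultimately show ?thesis by algebra
qed

lemma Kftc:
  fixes a b :: real
  assumes b: "b > -1" and a: "-2 < a" "a < 1" "a \<noteq> 0" "a \<noteq> -1"
  defines "c \<equiv> (a+b+1)*(a+b+2)/(a*(a+1))"
  shows "((\<lambda>t. t powr (a-1) * ((1-t) powr b - 1 + b*t)) has_integral
           (-1/a + b/(a+1) + c * Beta (a+2) (b+1))) {0..1}"
proof -
  define A where "A = 1/a"
  define B where "B = (a+b+1)/(a*(a+1))"
  define C where "C = -b/(a+1)"
  have a1: "a + 1 \<noteq> 0" using a by auto
  have CB: "C = B - A*(b+1)"
    using a a1 unfolding A_def B_def C_def by (simp add: divide_simps) (simp add: algebra_simps)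
  define G where "G = (\<lambda>t::real. t powr a * ((A + B*t) * (1-t) powr (b+1) - A - C*t))"
  define G' where "G' = (\<lambda>t::real. t powr (a-1) * ((1-t) powr b - 1 + b*t) - c * (t powr (a+2-1) * (1-t) powr (b+1-1)))"
  have deriv: "(G has_real_derivative G' t) (at t)" if t: "0 < t" "t < 1" for t
  proof -
    have "(G has_real_derivative
        (a * t powr (a-1)) * ((A + B*t) * (1-t) powr (b+1) - A - C*t) +
        t powr a * (B * (1-t) powr (b+1) + (A + B*t) * (-((b+1) * (1-t) powr (b+1-1))) - C)) (at t)"
      unfolding G_def using t
      by (auto intro!: derivative_eq_intros simp: field_simps)
    moreover have "(a * t powr (a-1)) * ((A + B*t) * (1-t) powr (b+1) - A - C*t) +
        t powr a * (B * (1-t) powr (b+1) + (A + B*t) * (-((b+1) * (1-t) powr (b+1-1))) - C) = G' t"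
    proof -
      have e1: "t powr a = t * t powr (a-1)" using t by (simp add: powr_diff field_simps powr_minus)
      have e2: "(1-t) powr (b+1) = (1-t) * (1-t) powr b" using t by (simp add: powr_add)
      have e3: "t powr (a+2-1) = t * t * t powr (a-1)"
      proof -
        have "t powr (a+2-1) = t powr (1 + a)" by (simp add: add.commute)
        also have "\<dots> = t * t powr a" using t by (simp add: powr_add)
        also have "\<dots> = t * t * t powr (a-1)" using e1 by simp
        finally show ?thesis .
      qed
      have "(a * t powr (a-1)) * ((A + B*t) * ((1-t) * (1-t) powr b) - A - C*t) +
        (t * t powr (a-1)) * (B * ((1-t) * (1-t) powr b) + (A + B*t) * (-((b+1) * (1-t) powr b)) - C)
        = t powr (a-1) * ((1-t) powr b - 1 + b*t) - c * (t * t * t powr (a-1) * (1-t) powr b)"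
        by (rule Kalg[OF a(3) a1 A_def B_def C_def c_def[THEN meta_eq_to_obj_eq]])
      then show ?thesis unfolding G'_def e1 e2 e3 by simp
    qed
    ultimately show ?thesis by simp
  qed
  have G0: "G 0 = 0" by (simp add: G_def)
  have G1': "G 1 = -A - C" unfolding G_def by simp
  have G1: "G 1 = -1/a + b/(a+1)" unfolding G1' A_def C_def by simp
  have lim0: "(G \<longlongrightarrow> 0) (at_right 0)"
  proof -
    have "(\<lambda>t. (A + B*t) * (1-t) powr (b+1) - A - C*t) \<in> O[at_right 0](\<lambda>t. t^2)"
      by (rule bracket_bigo[OF CB])
    from bigo_right0_bound[OF this] obtain e K where eK: "0 < e" "K > 0"
      "\<And>t. 0 < t \<Longrightarrow> t \<le> e \<Longrightarrow> \<bar>(A + B*t) * (1-t) powr (b+1) - A - C*t\<bar> \<le> K * \<bar>t^2\<bar>"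
      by blast
    have ev: "eventually (\<lambda>t. norm (G t) \<le> K * t powr (a+2)) (at_right 0)"
      unfolding eventually_at_right_field
    proof (rule exI[of _ e], intro conjI allI impI)
      show "0 < e" by fact
      fix t :: real assume t: "0 < t" "t < e"
      have "norm (G t) = t powr a * \<bar>(A + B*t) * (1-t) powr (b+1) - A - C*t\<bar>"
        by (simp add: G_def abs_mult)
      also have "\<dots> \<le> t powr a * (K * \<bar>t^2\<bar>)"
        using eK(3)[of t] t by (intro mult_left_mono) auto
      also have "\<dots> = K * t powr (a+2)"
      proof -
        have "t powr (a+2) = t powr a * t powr 2" using t by (simp add: powr_add)
        also have "t powr 2 = t^2" using t by (simp add: powr_numeral)
        finally show ?thesis by (simp add: mult_ac)
      qed
      finally show "norm (G t) \<le> K * t powr (a+2)" .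
    qed
    have "a + 2 > 0" using a by simp
    then have "((\<lambda>t. K * t powr (a+2)) \<longlongrightarrow> 0) (at_right 0)" by real_asymp
    from Lim_null_comparison[OF ev this] show ?thesis .
  qed
  have lim1: "(G \<longlongrightarrow> G 1) (at_left 1)"
  proof -
    have "(G \<longlongrightarrow> -A - C) (at_left 1)" unfolding G_def by (rule G_lim1[OF b])
    then show ?thesis using b by (simp add: G_def)
  qed
  have cont: "continuous_on {0..1} G"
  proof (rule continuous_on_eq_continuous_within[THEN iffD2], intro ballI)
    fix x :: real assume x: "x \<in> {0..1}"
    have w0: "at (0::real) within {0..1} = at_right 0" by (rule at_within_Icc_at_right) simp
    have w1: "at (1::real) within {0..1} = at_left 1" by (rule at_within_Icc_at_left) simp
    show "continuous (at x within {0..1}) G"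
    proof (cases "x = 0")
      case True
      have "(G \<longlongrightarrow> G 0) (at 0 within {0..1})" unfolding w0 G0 by (rule lim0)
      then show ?thesis unfolding True continuous_within .
    next
      case False
      show ?thesis
      proof (cases "x = 1")
        case True
        have "(G \<longlongrightarrow> G 1) (at 1 within {0..1})" unfolding w1 by (rule lim1)
        then show ?thesis unfolding True continuous_within .
      next
        case False
        with \<open>x \<noteq> 0\<close> x have "0 < x" "x < 1" by auto
        from deriv[OF this] have "isCont G x" by (rule DERIV_isCont)
        then show ?thesis by (rule continuous_at_imp_continuous_within)
      qed
    qed
  qed
  have ftc: "(G' has_integral (G 1 - G 0)) {0..1}"
    by (rule fundamental_theorem_of_calculus_interior)
       (use cont deriv in \<open>auto simp: has_real_derivative_iff_has_vector_derivative[symmetric]\<close>)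
  have beta: "((\<lambda>t. t powr (a+2-1) * (1-t) powr (b+1-1)) has_integral Beta (a+2) (b+1)) {0..1}"
    by (rule has_integral_Beta_real) (use a b in auto)
  have "((\<lambda>t. G' t + c * (t powr (a+2-1) * (1-t) powr (b+1-1))) has_integral
          (G 1 - G 0 + c * Beta (a+2) (b+1))) {0..1}"
    by (intro has_integral_add ftc has_integral_mult_right beta)
  moreover have "(\<lambda>t. G' t + c * (t powr (a+2-1) * (1-t) powr (b+1-1))) =
      (\<lambda>t. t powr (a-1) * ((1-t) powr b - 1 + b*t))" by (simp add: G'_def fun_eq_iff)
  ultimately show ?thesis unfolding G0 G1 by simp
qed


lemma not_nonpos_Int:
  fixes x :: real
  assumes "x > -2" "x \<noteq> 0" "x \<noteq> -1"
  shows "x \<notin> \<int>\<^sub>\<le>\<^sub>0"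
proof
  assume "x \<in> \<int>\<^sub>\<le>\<^sub>0"
  then obtain n :: int where n: "x = of_int n" "n \<le> 0" by (elim nonpos_Ints_cases)
  have "(-2::real) < of_int n" using n(1) assms(1) by simp
  then have "-2 < n" by linarith
  with n have "n = 0 \<or> n = -1" by linarith
  then show False
  proof
    assume "n = 0"
    then have "x = 0" using n(1) by simp
    then show False using assms(2) by simp
  next
    assume "n = -1"
    then have "x = -1" using n(1) by simp
    then show False using assms(3) by simp
  qed
qed

lemma c_Beta:
  fixes a b :: real
  assumes b: "b > -1" and a: "-2 < a" "a < 1" "a \<noteq> 0" "a \<noteq> -1"
    and ab: "a + b + 1 > -1" "a + b + 1 \<noteq> 0"
  shows "(a+b+1)*(a+b+2)/(a*(a+1)) * Beta (a+2) (b+1) = Gamma a * Gamma (b+1) / Gamma (a+b+1)"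
proof -
  have na: "a \<notin> \<int>\<^sub>\<le>\<^sub>0" by (rule not_nonpos_Int) (use a in auto)
  have na1: "a + 1 \<notin> \<int>\<^sub>\<le>\<^sub>0" by (rule not_nonpos_Int) (use a in auto)
  have nab: "a + b + 1 \<notin> \<int>\<^sub>\<le>\<^sub>0" by (rule not_nonpos_Int) (use ab in auto)
  have nab2: "a + b + 2 \<notin> \<int>\<^sub>\<le>\<^sub>0" by (rule not_nonpos_Int) (use ab in auto)
  have g1: "Gamma (a+2) = (a+1) * a * Gamma a"
  proof -
    have "Gamma (a+2) = Gamma ((a+1)+1)" by (simp add: add.assoc)
    also have "\<dots> = (a+1) * Gamma (a+1)" by (rule Gamma_plus1[OF na1])
    also have "Gamma (a+1) = a * Gamma a" by (rule Gamma_plus1[OF na])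
    finally show ?thesis by simp
  qed
  have g2: "Gamma (a+2+(b+1)) = (a+b+2) * (a+b+1) * Gamma (a+b+1)"
  proof -
    have "Gamma (a+2+(b+1)) = Gamma ((a+b+2)+1)" by (simp add: algebra_simps)
    also have "\<dots> = (a+b+2) * Gamma (a+b+2)" by (rule Gamma_plus1[OF nab2])
    also have "Gamma (a+b+2) = Gamma ((a+b+1)+1)" by (simp add: algebra_simps)
    also have "\<dots> = (a+b+1) * Gamma (a+b+1)" by (rule Gamma_plus1[OF nab])
    finally show ?thesis by simp
  qed
  have G0: "Gamma (a+b+1) \<noteq> 0" using nab by (simp add: Gamma_eq_zero_iff)
  have q0: "a + b + 2 \<noteq> 0" and r0: "a + 1 \<noteq> 0" using ab a by auto
  have alg: "\<And>p q r a X Y Z::real. p \<noteq> 0 \<Longrightarrow> q \<noteq> 0 \<Longrightarrow> r \<noteq> 0 \<Longrightarrow> a \<noteq> 0 \<Longrightarrow> Z \<noteq> 0 \<Longrightarrow>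
      p*q/(a*r) * (r*a*X * Y * inverse(q*p*Z)) = X*Y/Z"
    by (simp add: field_simps)
  have "Beta (a+2) (b+1) = (a+1) * a * Gamma a * Gamma (b+1) * inverse ((a+b+2) * (a+b+1) * Gamma (a+b+1))"
    unfolding Beta_altdef rGamma_inverse_Gamma g1 g2 ..
  then show ?thesis using alg[OF ab(2) q0 r0 a(3) G0, of "Gamma a" "Gamma (b+1)"] by simp
qed

lemma sin_pi_ne0:
  fixes x :: real assumes "-1 < x" "x < 1" "x \<noteq> 0"
  shows "sin (pi * x) \<noteq> 0"
proof
  assume "sin (pi * x) = 0"
  then obtain i :: int where i: "pi * x = of_int i * pi" by (auto simp: sin_zero_iff_int2)
  then have "x = of_int i" by simp
  with assms have "i = 0" by linarith
  with \<open>x = of_int i\<close> assms show False by simp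
qed

lemma cos_pi_ne0:
  fixes x :: real assumes "-1 < x" "x < 1/2" "x \<noteq> -1/2"
  shows "cos (pi * x) \<noteq> 0"
proof
  assume "cos (pi * x) = 0"
  then obtain i :: int where i: "odd i" "pi * x = of_int i * (pi/2)" by (auto simp: cos_zero_iff_int)
  then have "2 * x = of_int i" by (simp add: field_simps)
  with assms have "i = -1 \<or> i = 0" by linarith
  with i \<open>2 * x = of_int i\<close> assms show False by auto
qed

lemma const_formula:
  fixes \<beta> :: real
  assumes "-1 < \<beta>" "\<beta> < 1/2" "\<beta> \<noteq> 0" "\<beta> \<noteq> -1/2"
  shows "Gamma (2*\<beta>+2) * (Gamma (-1-2*\<beta>) * Gamma (\<beta>+1) / Gamma (-\<beta>))
         = - (Gamma (1+\<beta>))\<^sup>2 / (2 * cos (\<beta> * pi))"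
proof -
  have s0: "sin (pi * \<beta>) \<noteq> 0" by (rule sin_pi_ne0) (use assms in auto)
  have c0: "cos (pi * \<beta>) \<noteq> 0" by (rule cos_pi_ne0) (use assms in auto)
  have r1: "Gamma (2*\<beta>+2) * Gamma (-1-2*\<beta>) = pi / (2 * sin (pi*\<beta>) * cos (pi*\<beta>))"
  proof -
    have "Gamma (2*\<beta>+2) * Gamma (1 - (2*\<beta>+2)) = pi / sin (pi * (2*\<beta>+2))"
      by (rule Gamma_reflection_real)
    moreover have "sin (pi * (2*\<beta>+2)) = sin (2 * (pi*\<beta>))"
    proof -
      have "pi * (2*\<beta>+2) = 2 * (pi*\<beta>) + 2 * pi" by (simp add: algebra_simps)
      then show ?thesis by (simp only: sin_periodic)
    qed
    ultimately show ?thesis by (simp add: sin_double)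
  qed
  have r2: "Gamma (-\<beta>) * Gamma (1+\<beta>) = - pi / sin (pi*\<beta>)"
    using Gamma_reflection_real[of "-\<beta>"] by simp
  have g0: "Gamma (-\<beta>) \<noteq> 0" using r2 s0 by auto
  have "Gamma (2*\<beta>+2) * (Gamma (-1-2*\<beta>) * Gamma (\<beta>+1) / Gamma (-\<beta>))
      = (Gamma (2*\<beta>+2) * Gamma (-1-2*\<beta>)) * Gamma (1+\<beta>) * Gamma (1+\<beta>) / (Gamma (-\<beta>) * Gamma (1+\<beta>))"
    using g0 r2 s0 by (simp add: field_simps)
  also have "\<dots> = - (Gamma (1+\<beta>))\<^sup>2 / (2 * cos (\<beta> * pi))"
    unfolding r1 r2 using s0 c0 by (simp add: field_simps power2_eq_square mult.commute)
  finally show ?thesis .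
qed


lemma powr_tail':
  fixes p T :: real
  assumes "p < -1" "T > 0"
  shows "integrable lborel (\<lambda>z. indicator {T..} z * z powr p)"
        "(\<integral>z. indicator {T..} z * z powr p \<partial>lborel) = - (T powr (p+1)) / (p+1)"
proof -
  note h = HK2L[OF has_integral_powr_to_inf[OF assms]]
  show "integrable lborel (\<lambda>z. indicator {T..} z * z powr p)"
       "(\<integral>z. indicator {T..} z * z powr p \<partial>lborel) = - (T powr (p+1)) / (p+1)"
    by (rule h; use assms in auto)+
qed

lemma mellin0:
  fixes w b :: real
  assumes w: "0 < w" "w < 1" and b: "b > -1"
  shows "integrable lborel (\<lambda>z. indicator {0<..} z * z powr (w-1) * phi b z)"
        "(\<integral>z. indicator {0<..} z * z powr (w-1) * phi b z \<partial>lborel) = Gamma w * Beta (1-w) (b+1)"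
proof -
  have k0: "\<And>t. t \<le> 0 \<Longrightarrow> h0 b t = 0" by (simp add: h0_def)
  have ki: "integrable lborel (\<lambda>t. t powr (-w) * h0 b t)" using LBeta(1)[of "-w" b] w b by simp
  have kv: "(\<integral>t. t powr (-w) * h0 b t \<partial>lborel) = Beta (1-w) (b+1)" using LBeta(2)[of "-w" b] w b by simp
  note M = mellin[OF w(1) h0_measurable k0 ki]
  show "integrable lborel (\<lambda>z. indicator {0<..} z * z powr (w-1) * phi b z)"
    using M(1) unfolding phi_def .
  show "(\<integral>z. indicator {0<..} z * z powr (w-1) * phi b z \<partial>lborel) = Gamma w * Beta (1-w) (b+1)"
    using M(2) unfolding phi_def kv .
qed

lemma integrable_remainder:
  fixes b w Q :: real and n :: nat and q :: "real \<Rightarrow> real"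
  assumes b: "b > -1" and w: "w \<ge> 0" "w < real n + 1"
    and qm[measurable]: "q \<in> borel_measurable borel"
    and qb: "\<And>t. 0 \<le> t \<Longrightarrow> t \<le> 1 \<Longrightarrow> \<bar>q t\<bar> \<le> Q"
    and O: "(\<lambda>t. (1-t) powr b - q t) \<in> O[at_right 0](\<lambda>t. t^n)"
  shows "integrable lborel (\<lambda>t. t powr (-w) * (h0 b t - h0 0 t * q t))"
proof -
  from bigo_right0_bound[OF O] obtain e K where eK: "0 < e" "e < 1" "K > 0"
    "\<And>t. 0 < t \<Longrightarrow> t \<le> e \<Longrightarrow> \<bar>(1-t) powr b - q t\<bar> \<le> K * \<bar>t^n\<bar>" by blast
  have Q0: "Q \<ge> 0" using qb[of 0] by auto
  define g where "g = (\<lambda>t. K * (t powr (real n - w) * h0 0 t) + e powr (-w) * (h0 b t + Q * h0 0 t))"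
  have gi: "integrable lborel g" unfolding g_def
    using LBeta(1)[of "real n - w" 0] LBeta(1)[of 0 0] h0_integrable[OF b] h0_integrable[of 0] w
    by (intro Bochner_Integration.integrable_add integrable_mult_right) auto
  show ?thesis
  proof (rule Bochner_Integration.integrable_bound[OF gi])
    show "(\<lambda>t. t powr (-w) * (h0 b t - h0 0 t * q t)) \<in> borel_measurable lborel" by measurable
    show "AE t in lborel. norm (t powr (-w) * (h0 b t - h0 0 t * q t)) \<le> norm (g t)"
    proof (rule AE_I2)
      fix t :: real
      have g0: "g t \<ge> 0" unfolding g_def using eK Q0
        by (intro add_nonneg_nonneg mult_nonneg_nonneg h0_nonneg) auto
      consider "\<not> (0 < t \<and> t < 1)" | "0 < t \<and> t \<le> e" | "e < t \<and> t < 1" by linarith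
      then show "norm (t powr (-w) * (h0 b t - h0 0 t * q t)) \<le> norm (g t)"
      proof cases
        case 1
        then have "h0 b t = 0" "h0 0 t = 0" by (auto simp: h0_def)
        then show ?thesis using g0 by simp
      next
        case 2
        then have t1: "t < 1" using eK by auto
        have "\<bar>t powr (-w) * ((1-t) powr b - q t)\<bar> = t powr (-w) * \<bar>(1-t) powr b - q t\<bar>"
          by (simp add: abs_mult)
        also have "\<dots> \<le> t powr (-w) * (K * t^n)"
          using eK(4)[of t] 2 by (intro mult_left_mono) auto
        also have "\<dots> = K * t powr (real n - w)"
          using 2 by (simp add: powr_diff powr_minus powr_realpow divide_inverse mult_ac)
        also have "\<dots> \<le> g t"
        proof -
          have "0 \<le> e powr (-w) * (h0 b t + Q * h0 0 t)" using Q0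
            by (intro mult_nonneg_nonneg add_nonneg_nonneg h0_nonneg) auto
          then show ?thesis using 2 t1 by (simp add: g_def h0_def)
        qed
        finally show ?thesis using 2 t1 g0 by (simp add: h0_def)
      next
        case 3
        then have t0: "0 < t" using eK by auto
        have "\<bar>t powr (-w) * ((1-t) powr b - q t)\<bar> = t powr (-w) * \<bar>(1-t) powr b - q t\<bar>"
          by (simp add: abs_mult)
        also have "\<dots> \<le> e powr (-w) * ((1-t) powr b + Q)"
        proof (rule mult_mono)
          show "t powr (-w) \<le> e powr (-w)" using 3 eK w by (intro powr_mono2') auto
          show "\<bar>(1-t) powr b - q t\<bar> \<le> (1-t) powr b + Q"
            using qb[of t] 3 t0 powr_ge_zero[of "1-t" b] unfolding abs_le_iff by (intro conjI; linarith)
        qed auto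
        also have "\<dots> \<le> g t"
        proof -
          have "0 \<le> K * (t powr (real n - w) * h0 0 t)" using eK by (auto intro!: mult_nonneg_nonneg h0_nonneg)
          then show ?thesis using 3 t0 by (simp add: g_def h0_def)
        qed
        finally show ?thesis using 3 t0 g0 by (simp add: h0_def)
      qed
    qed
  qed
qed


lemma L_to_HK01:
  fixes f :: "real \<Rightarrow> real"
  assumes fi: "integrable lborel f" and f0: "\<And>t. t \<notin> {0<..<1} \<Longrightarrow> f t = 0"
  shows "(\<integral>t. f t \<partial>lborel) = integral {0..1} f"
proof -
  have eq: "(\<lambda>t. indicator {0..1} t *\<^sub>R f t) = f"
  proof
    fix t :: real
    show "indicator {0..1} t *\<^sub>R f t = f t"
    proof (cases "t \<in> {0<..<1}")
      case True then show ?thesis by (simp add: indicator_def)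
    next
      case False then show ?thesis by (simp add: f0)
    qed
  qed
  have si: "set_integrable lborel {0..1} f" unfolding set_integrable_def eq by (rule fi)
  have "(\<integral>t. f t \<partial>lborel) = set_lebesgue_integral lborel {0..1} f"
    unfolding set_lebesgue_integral_def eq ..
  also have "\<dots> = integral {0..1} f" by (rule set_borel_integral_eq_integral[OF si])
  finally show ?thesis .
qed

lemma HK_core1:
  fixes a b :: real
  assumes b: "b > -1" and a: "-1 < a" "a < 0"
  defines "c \<equiv> (a+b+1)*(a+b+2)/(a*(a+1))"
  shows "((\<lambda>t. t powr (a-1) * (h0 b t - h0 0 t * 1)) has_integral (-1/a + c * Beta (a+2) (b+1))) {0..1}"
proof -
  have K: "((\<lambda>t. t powr (a-1) * ((1-t) powr b - 1 + b*t)) has_integral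
           (-1/a + b/(a+1) + c * Beta (a+2) (b+1))) {0..1}"
    unfolding c_def by (rule Kftc) (use a b in auto)
  have P: "((\<lambda>t. b * t powr a) has_integral (b * (1 powr (a+1) / (a+1)))) {0..1}"
    by (intro has_integral_mult_right has_integral_powr_from_0) (use a in auto)
  have D: "((\<lambda>t. t powr (a-1) * ((1-t) powr b - 1 + b*t) - b * t powr a) has_integral
           (-1/a + b/(a+1) + c * Beta (a+2) (b+1) - b * (1 powr (a+1) / (a+1)))) {0..1}"
    by (rule has_integral_diff[OF K P])
  have "((\<lambda>t. t powr (a-1) * (h0 b t - h0 0 t * 1)) has_integral
           (-1/a + b/(a+1) + c * Beta (a+2) (b+1) - b * (1 powr (a+1) / (a+1)))) (cbox 0 1)"
  proof (rule has_integral_spike_interior[of _ _ 0 1])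
    show "((\<lambda>t. t powr (a-1) * ((1-t) powr b - 1 + b*t) - b * t powr a) has_integral
           (-1/a + b/(a+1) + c * Beta (a+2) (b+1) - b * (1 powr (a+1) / (a+1)))) (cbox 0 1)"
      using D by simp
    fix t :: real assume "t \<in> box 0 1"
    then have t: "0 < t" "t < 1" by auto
    have "t powr a = t powr (a-1) * t" using t by (simp add: powr_diff powr_minus field_simps)
    then show "t powr (a-1) * (h0 b t - h0 0 t * 1) = t powr (a-1) * ((1-t) powr b - 1 + b*t) - b * t powr a"
      using t by (simp add: h0_def algebra_simps)
  qed
  then show ?thesis by simp
qed

lemma HK_core2:
  fixes a b :: real
  assumes b: "b > -1" and a: "-2 < a" "a < -1"
  defines "c \<equiv> (a+b+1)*(a+b+2)/(a*(a+1))"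
  shows "((\<lambda>t. t powr (a-1) * (h0 b t - h0 0 t * (1 - b*t))) has_integral (-1/a + b/(a+1) + c * Beta (a+2) (b+1))) {0..1}"
proof -
  have K: "((\<lambda>t. t powr (a-1) * ((1-t) powr b - 1 + b*t)) has_integral
           (-1/a + b/(a+1) + c * Beta (a+2) (b+1))) {0..1}"
    unfolding c_def by (rule Kftc) (use a b in auto)
  have "((\<lambda>t. t powr (a-1) * (h0 b t - h0 0 t * (1 - b*t))) has_integral
           (-1/a + b/(a+1) + c * Beta (a+2) (b+1))) (cbox 0 1)"
  proof (rule has_integral_spike_interior[of _ _ 0 1])
    show "((\<lambda>t. t powr (a-1) * ((1-t) powr b - 1 + b*t)) has_integral
           (-1/a + b/(a+1) + c * Beta (a+2) (b+1))) (cbox 0 1)"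
      using K by simp
    fix t :: real assume "t \<in> box 0 1"
    then have t: "0 < t" "t < 1" by auto
    then show "t powr (a-1) * (h0 b t - h0 0 t * (1 - b*t)) = t powr (a-1) * ((1-t) powr b - 1 + b*t)"
      by (simp add: h0_def algebra_simps)
  qed
  then show ?thesis by simp
qed


lemma lap0: "(z::real) > 0 \<Longrightarrow> integrable lborel (\<lambda>t. indicator {0<..} t * exp (-(z*t)))"
  using lap(1)[of z 0] by simp
lemma lap0v: "(z::real) > 0 \<Longrightarrow> (\<integral>t. indicator {0<..} t * exp (-(z*t)) \<partial>lborel) = 1/z"
  using lap(2)[of z 0] by simp
lemma lap1: "(z::real) > 0 \<Longrightarrow> integrable lborel (\<lambda>t. indicator {0<..} t * t * exp (-(z*t)))"
  using lap(1)[of z 1] by simp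
lemma lap1v: "(z::real) > 0 \<Longrightarrow> (\<integral>t. indicator {0<..} t * t * exp (-(z*t)) \<partial>lborel) = 1/z^2"
  using lap(2)[of z 1] by (simp add: power2_eq_square)

lemma mellin_regime0:
  fixes b :: real
  assumes "-1 < b" "b < -1/2"
  shows "integrable lborel (\<lambda>z. indicator {0<..} z * z powr ((2*b+2)-1) * phi b z)"
        "(\<integral>z. indicator {0<..} z * z powr ((2*b+2)-1) * phi b z \<partial>lborel)
           = Gamma (2*b+2) * (Gamma (-1-2*b) * Gamma (b+1) / Gamma (-b))"
proof -
  have w: "0 < 2*b+2" "2*b+2 < 1" using assms by auto
  note M = mellin0[OF w, of b]
  show "integrable lborel (\<lambda>z. indicator {0<..} z * z powr ((2*b+2)-1) * phi b z)"
    using M(1) assms by simp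
  have "Beta (1 - (2*b+2)) (b+1) = Gamma (-1-2*b) * Gamma (b+1) / Gamma (-b)"
    by (simp add: Beta_altdef rGamma_inverse_Gamma divide_inverse algebra_simps)
  then show "(\<integral>z. indicator {0<..} z * z powr ((2*b+2)-1) * phi b z \<partial>lborel)
           = Gamma (2*b+2) * (Gamma (-1-2*b) * Gamma (b+1) / Gamma (-b))"
    using M(2) assms by simp
qed

lemma mellin_regime1:
  fixes b :: real
  assumes b: "-1/2 < b" "b < 0"
  shows "integrable lborel (\<lambda>z. indicator {0<..} z * z powr ((2*b+2)-1) * (phi b z - 1/z))"
        "(\<integral>z. indicator {0<..} z * z powr ((2*b+2)-1) * (phi b z - 1/z) \<partial>lborel)
           = Gamma (2*b+2) * (Gamma (-1-2*b) * Gamma (b+1) / Gamma (-b))"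
proof -
  define w where "w = 2*b+2"
  define a where "a = -1-2*b"
  have a: "-1 < a" "a < 0" using b by (auto simp: a_def)
  have aw: "a - 1 = -w" "w = 1 - a" by (simp_all add: a_def w_def)
  have w: "w > 1" "w < 2" using b by (auto simp: w_def)
  define k where "k = (\<lambda>t. h0 b t - indicator {0<..} t)"
  have km: "k \<in> borel_measurable borel" unfolding k_def by measurable
  have k0: "\<And>t. t \<le> 0 \<Longrightarrow> k t = 0" by (simp add: k_def h0_def)
  define f1 where "f1 = (\<lambda>t. t powr (-w) * (h0 b t - h0 0 t * 1))"
  define f2 where "f2 = (\<lambda>t::real. indicator {1..} t * t powr (-w))"
  have split: "(\<lambda>t. t powr (-w) * k t) = (\<lambda>t. f1 t - f2 t)"
  proof
    fix t :: real
    consider "t \<le> 0" | "0 < t \<and> t < 1" | "1 \<le> t" by linarith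
    then show "t powr (-w) * k t = f1 t - f2 t"
      by cases (auto simp: k_def f1_def f2_def h0_def indicator_def)
  qed
  have I1: "integrable lborel f1" unfolding f1_def
  proof (rule integrable_remainder[of b w 1 "\<lambda>_. 1" 1])
    show "(\<lambda>t. (1-t) powr b - 1) \<in> O[at_right 0](\<lambda>t. t^1)" by real_asymp
  qed (use b w in auto)
  have I2: "integrable lborel f2" unfolding f2_def by (rule powr_tail'(1)) (use w in auto)
  have V2: "(\<integral>t. f2 t \<partial>lborel) = 1/(w-1)"
    unfolding f2_def using powr_tail'(2)[of "-w" 1] w by (simp add: divide_simps) argo
  have V1: "(\<integral>t. f1 t \<partial>lborel) = -1/a + (a+b+1)*(a+b+2)/(a*(a+1)) * Beta (a+2) (b+1)"
  proof -
    have "(\<integral>t. f1 t \<partial>lborel) = integral {0..1} f1"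
      by (rule L_to_HK01[OF I1]) (auto simp: f1_def h0_def)
    also have "\<dots> = -1/a + (a+b+1)*(a+b+2)/(a*(a+1)) * Beta (a+2) (b+1)"
      unfolding f1_def aw(1)[symmetric] by (rule integral_unique, rule HK_core1) (use a b in auto)
    finally show ?thesis .
  qed
  have ki: "integrable lborel (\<lambda>t. t powr (-w) * k t)"
    unfolding split by (intro Bochner_Integration.integrable_diff I1 I2)
  have kv: "(\<integral>t. t powr (-w) * k t \<partial>lborel) = Gamma (-1-2*b) * Gamma (b+1) / Gamma (-b)"
  proof -
    have "(\<integral>t. t powr (-w) * k t \<partial>lborel) = (\<integral>t. f1 t \<partial>lborel) - (\<integral>t. f2 t \<partial>lborel)"
      unfolding split by (rule Bochner_Integration.integral_diff[OF I1 I2])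
    also have "\<dots> = (a+b+1)*(a+b+2)/(a*(a+1)) * Beta (a+2) (b+1)"
      unfolding V1 V2 aw(2) using a by simp
    also have "\<dots> = Gamma a * Gamma (b+1) / Gamma (a+b+1)"
      by (rule c_Beta) (use a b in \<open>auto simp: a_def\<close>)
    finally show ?thesis by (simp add: a_def)
  qed
  have wpos: "w > 0" using w by auto
  have M1: "integrable lborel (\<lambda>z. indicator {0<..} z * z powr (w-1) * (\<integral>t. exp(-(z*t)) * k t \<partial>lborel))"
    by (rule mellin(1)) (use wpos km k0 ki in auto)
  have M2: "(\<integral>z. indicator {0<..} z * z powr (w-1) * (\<integral>t. exp(-(z*t)) * k t \<partial>lborel) \<partial>lborel)
       = Gamma w * (\<integral>t. t powr (-w) * k t \<partial>lborel)"
    by (rule mellin(2)) (use wpos km k0 ki in auto)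
  have inner: "(\<lambda>z. indicator {0<..} z * z powr (w-1) * (\<integral>t. exp(-(z*t)) * k t \<partial>lborel)) =
               (\<lambda>z. indicator {0<..} z * z powr (w-1) * (phi b z - 1/z))"
  proof
    fix z :: real
    show "indicator {0<..} z * z powr (w-1) * (\<integral>t. exp(-(z*t)) * k t \<partial>lborel) =
          indicator {0<..} z * z powr (w-1) * (phi b z - 1/z)"
    proof (cases "z > 0")
      case True
      have "(\<integral>t. exp(-(z*t)) * k t \<partial>lborel) =
            (\<integral>t. exp(-(z*t)) * h0 b t - indicator {0<..} t * exp (-(z*t)) \<partial>lborel)"
        by (simp add: k_def algebra_simps)
      also have "\<dots> = phi b z - 1/z"
        unfolding phi_def using phi_integrable[of b z] lap0[OF True] lap0v[OF True] b True
        by (subst Bochner_Integration.integral_diff) auto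
      finally show ?thesis by simp
    qed simp
  qed
  show "integrable lborel (\<lambda>z. indicator {0<..} z * z powr ((2*b+2)-1) * (phi b z - 1/z))"
    using M1[unfolded inner] unfolding w_def .
  show "(\<integral>z. indicator {0<..} z * z powr ((2*b+2)-1) * (phi b z - 1/z) \<partial>lborel)
           = Gamma (2*b+2) * (Gamma (-1-2*b) * Gamma (b+1) / Gamma (-b))"
    using M2[unfolded inner kv] unfolding w_def .
qed

lemma mellin_regime2:
  fixes b :: real
  assumes b: "0 < b" "b < 1/2"
  shows "integrable lborel (\<lambda>z. indicator {0<..} z * z powr ((2*b+2)-1) * (phi b z - (1/z - b/z^2)))"
        "(\<integral>z. indicator {0<..} z * z powr ((2*b+2)-1) * (phi b z - (1/z - b/z^2)) \<partial>lborel)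
           = Gamma (2*b+2) * (Gamma (-1-2*b) * Gamma (b+1) / Gamma (-b))"
proof -
  define w where "w = 2*b+2"
  define a where "a = -1-2*b"
  have a: "-2 < a" "a < -1" using b by (auto simp: a_def)
  have aw: "a - 1 = -w" "w = 1 - a" by (simp_all add: a_def w_def)
  have w: "w > 2" "w < 3" using b by (auto simp: w_def)
  define k where "k = (\<lambda>t. h0 b t - indicator {0<..} t * (1 - b*t))"
  have km: "k \<in> borel_measurable borel" unfolding k_def by measurable
  have k0: "\<And>t. t \<le> 0 \<Longrightarrow> k t = 0" by (simp add: k_def h0_def)
  define f1 where "f1 = (\<lambda>t. t powr (-w) * (h0 b t - h0 0 t * (1 - b*t)))"
  define f2 where "f2 = (\<lambda>t::real. indicator {1..} t * t powr (-w))"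
  define f3 where "f3 = (\<lambda>t::real. indicator {1..} t * t powr (1-w))"
  have split: "(\<lambda>t. t powr (-w) * k t) = (\<lambda>t. f1 t - f2 t + b * f3 t)"
  proof
    fix t :: real
    consider "t \<le> 0" | "0 < t \<and> t < 1" | "1 \<le> t" by linarith
    then show "t powr (-w) * k t = f1 t - f2 t + b * f3 t"
    proof cases
      case 3
      then have "t powr (1-w) = t powr (-w) * t" by (simp add: powr_diff powr_minus field_simps)
      then show ?thesis using 3 by (simp add: k_def f1_def f2_def f3_def h0_def indicator_def algebra_simps)
    qed (auto simp: k_def f1_def f2_def f3_def h0_def indicator_def)
  qed
  have I1: "integrable lborel f1" unfolding f1_def
  proof (rule integrable_remainder[of b w 2 "\<lambda>t. 1 - b*t" "1 + \<bar>b\<bar>"])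
    show "(\<lambda>t. (1-t) powr b - (1 - b*t)) \<in> O[at_right 0](\<lambda>t. t^2)" by real_asymp
    show "\<And>t. 0 \<le> t \<Longrightarrow> t \<le> 1 \<Longrightarrow> \<bar>1 - b*t\<bar> \<le> 1 + \<bar>b\<bar>"
    proof -
      fix t :: real assume t: "0 \<le> t" "t \<le> 1"
      have "\<bar>b*t\<bar> \<le> \<bar>b\<bar>" using t by (simp add: abs_mult mult_left_le)
      then show "\<bar>1 - b*t\<bar> \<le> 1 + \<bar>b\<bar>" by linarith
    qed
  qed (use b w in auto)
  have I2: "integrable lborel f2" unfolding f2_def by (rule powr_tail'(1)) (use w in auto)
  have I3: "integrable lborel f3" unfolding f3_def by (rule powr_tail'(1)) (use w in auto)
  have V2: "(\<integral>t. f2 t \<partial>lborel) = 1/(w-1)"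
    unfolding f2_def using powr_tail'(2)[of "-w" 1] w by (simp add: divide_simps) argo
  have V3: "(\<integral>t. f3 t \<partial>lborel) = 1/(w-2)"
    unfolding f3_def using powr_tail'(2)[of "1-w" 1] w by (simp add: divide_simps) argo
  have V1: "(\<integral>t. f1 t \<partial>lborel) = -1/a + b/(a+1) + (a+b+1)*(a+b+2)/(a*(a+1)) * Beta (a+2) (b+1)"
  proof -
    have "(\<integral>t. f1 t \<partial>lborel) = integral {0..1} f1"
      by (rule L_to_HK01[OF I1]) (auto simp: f1_def h0_def)
    also have "\<dots> = -1/a + b/(a+1) + (a+b+1)*(a+b+2)/(a*(a+1)) * Beta (a+2) (b+1)"
      unfolding f1_def aw(1)[symmetric] by (rule integral_unique, rule HK_core2) (use a b in auto)
    finally show ?thesis .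
  qed
  have ki: "integrable lborel (\<lambda>t. t powr (-w) * k t)"
    unfolding split by (intro Bochner_Integration.integrable_diff Bochner_Integration.integrable_add
                              integrable_mult_right I1 I2 I3)
  have kv: "(\<integral>t. t powr (-w) * k t \<partial>lborel) = Gamma (-1-2*b) * Gamma (b+1) / Gamma (-b)"
  proof -
    have "(\<integral>t. t powr (-w) * k t \<partial>lborel) = (\<integral>t. f1 t \<partial>lborel) - (\<integral>t. f2 t \<partial>lborel) + b * (\<integral>t. f3 t \<partial>lborel)"
      unfolding split using I1 I2 I3
      by (simp add: Bochner_Integration.integral_diff Bochner_Integration.integral_add
                    Bochner_Integration.integrable_diff)
    also have "\<dots> = (a+b+1)*(a+b+2)/(a*(a+1)) * Beta (a+2) (b+1)"
    proof -
      have e1: "1/((1-a)-1) = -(1/a)" by simp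
      have e2: "1/((1-a)-2) = -(1/(a+1))"
      proof -
        have "(1-a)-2 = -(a+1)" by simp
        then show ?thesis by (simp only: divide_minus_right)
      qed
      show ?thesis unfolding V1 V2 V3 aw(2) e1 e2 by simp
    qed
    also have "\<dots> = Gamma a * Gamma (b+1) / Gamma (a+b+1)"
      by (rule c_Beta) (use a b in \<open>auto simp: a_def\<close>)
    finally show ?thesis by (simp add: a_def)
  qed
  have wpos: "w > 0" using w by auto
  have M1: "integrable lborel (\<lambda>z. indicator {0<..} z * z powr (w-1) * (\<integral>t. exp(-(z*t)) * k t \<partial>lborel))"
    by (rule mellin(1)) (use wpos km k0 ki in auto)
  have M2: "(\<integral>z. indicator {0<..} z * z powr (w-1) * (\<integral>t. exp(-(z*t)) * k t \<partial>lborel) \<partial>lborel)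
       = Gamma w * (\<integral>t. t powr (-w) * k t \<partial>lborel)"
    by (rule mellin(2)) (use wpos km k0 ki in auto)
  have inner: "(\<lambda>z. indicator {0<..} z * z powr (w-1) * (\<integral>t. exp(-(z*t)) * k t \<partial>lborel)) =
               (\<lambda>z. indicator {0<..} z * z powr (w-1) * (phi b z - (1/z - b/z^2)))"
  proof
    fix z :: real
    show "indicator {0<..} z * z powr (w-1) * (\<integral>t. exp(-(z*t)) * k t \<partial>lborel) =
          indicator {0<..} z * z powr (w-1) * (phi b z - (1/z - b/z^2))"
    proof (cases "z > 0")
      case True
      have "(\<integral>t. exp(-(z*t)) * k t \<partial>lborel) =
            (\<integral>t. exp(-(z*t)) * h0 b t - indicator {0<..} t * exp (-(z*t)) + b * (indicator {0<..} t * t * exp (-(z*t))) \<partial>lborel)"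
        by (simp add: k_def algebra_simps)
      also have "\<dots> = phi b z - 1/z + b * (1/z^2)"
        unfolding phi_def using phi_integrable[of b z] lap0[OF True] lap0v[OF True] lap1[OF True] lap1v[OF True] b True
        by (simp add: Bochner_Integration.integral_diff Bochner_Integration.integral_add
                    Bochner_Integration.integrable_diff)
      finally show ?thesis by simp
    qed simp
  qed
  show "integrable lborel (\<lambda>z. indicator {0<..} z * z powr ((2*b+2)-1) * (phi b z - (1/z - b/z^2)))"
    using M1[unfolded inner] unfolding w_def .
  show "(\<integral>z. indicator {0<..} z * z powr ((2*b+2)-1) * (phi b z - (1/z - b/z^2)) \<partial>lborel)
           = Gamma (2*b+2) * (Gamma (-1-2*b) * Gamma (b+1) / Gamma (-b))"
    using M2[unfolded inner kv] unfolding w_def .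
qed


lemma assemble:
  fixes b d T C M :: real and S :: "real \<Rightarrow> real"
  assumes b: "b > -1" and d: "d = 2*b+1" and T: "T \<ge> 1" and d4: "d < 4"
    and Mi: "integrable lborel (\<lambda>z. indicator {0<..} z * z powr d * (phi b z - S z))"
    and Mv: "(\<integral>z. indicator {0<..} z * z powr d * (phi b z - S z) \<partial>lborel) = C"
    and Si: "integrable lborel (\<lambda>z. indicator {0<..T} z * (z powr d * S z))"
    and Ri: "integrable lborel (\<lambda>z. indicator {T<..} z * (z powr d * (Q b z - S z)))"
    and M0: "M \<ge> 0" and Mb: "\<And>z. z > 0 \<Longrightarrow> \<bar>phi b z - Q b z\<bar> \<le> M / z^5"
  shows "\<bar>tri_integral b T - ((\<integral>z. indicator {0<..T} z * (z powr d * S z) \<partial>lborel) + C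
            - (\<integral>z. indicator {T<..} z * (z powr d * (Q b z - S z)) \<partial>lborel))\<bar>
         \<le> M * T powr (d - 4) / (4 - d)"
proof -
  define F where "F = (\<lambda>z. indicator {0<..} z * z powr d * (phi b z - S z))"
  have Fi: "integrable lborel F" using Mi unfolding F_def .
  have FA: "integrable lborel (\<lambda>z. indicator {0<..T} z * F z)"
    using integrable_mult_indicator[OF _ Fi, of "{0<..T}"] by simp
  have FB: "integrable lborel (\<lambda>z. indicator {T<..} z * F z)"
    using integrable_mult_indicator[OF _ Fi, of "{T<..}"] by simp
  have splitF: "F z = indicator {0<..T} z * F z + indicator {T<..} z * F z" for z
    using T by (cases "z > 0"; cases "z > T") (auto simp: F_def indicator_def)
  have CF: "C = (\<integral>z. indicator {0<..T} z * F z \<partial>lborel) + (\<integral>z. indicator {T<..} z * F z \<partial>lborel)"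
  proof -
    have "C = (\<integral>z. F z \<partial>lborel)" unfolding Mv[symmetric] F_def ..
    also have "\<dots> = (\<integral>z. indicator {0<..T} z * F z + indicator {T<..} z * F z \<partial>lborel)"
      by (rule Bochner_Integration.integral_cong[OF refl splitF])
    also have "\<dots> = (\<integral>z. indicator {0<..T} z * F z \<partial>lborel) + (\<integral>z. indicator {T<..} z * F z \<partial>lborel)"
      by (rule Bochner_Integration.integral_add[OF FA FB])
    finally show ?thesis .
  qed
  have tri: "tri_integral b T = (\<integral>z. indicator {0<..T} z * (z powr d * S z) \<partial>lborel)
            + (\<integral>z. indicator {0<..T} z * F z \<partial>lborel)"
  proof -
    have eq: "(\<lambda>z. indicator {0<..T} z * (z powr d * phi b z)) =
        (\<lambda>z. indicator {0<..T} z * (z powr d * S z) + indicator {0<..T} z * F z)"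
      by (auto simp: fun_eq_iff F_def indicator_def algebra_simps)
    show ?thesis unfolding tri_repr[OF b] d[symmetric] eq
      by (rule Bochner_Integration.integral_add[OF Si FA])
  qed
  define G where "G = (\<lambda>z. indicator {T<..} z * (z powr d * (phi b z - Q b z)))"
  have eqG: "(\<lambda>z. indicator {T<..} z * F z) = (\<lambda>z. indicator {T<..} z * (z powr d * (Q b z - S z)) + G z)"
  proof
    fix z :: real
    show "indicator {T<..} z * F z = indicator {T<..} z * (z powr d * (Q b z - S z)) + G z"
    proof (cases "z > T")
      case True
      then have "z > 0" using T by auto
      then show ?thesis using True by (simp add: F_def G_def algebra_simps)
    qed (simp add: G_def)
  qed
  have Gi: "integrable lborel G"
  proof -
    have "G = (\<lambda>z. indicator {T<..} z * F z - indicator {T<..} z * (z powr d * (Q b z - S z)))"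
      using eqG by (simp add: fun_eq_iff)
    then show ?thesis using FB Ri by (simp add: Bochner_Integration.integrable_diff)
  qed
  have FBv: "(\<integral>z. indicator {T<..} z * F z \<partial>lborel) =
       (\<integral>z. indicator {T<..} z * (z powr d * (Q b z - S z)) \<partial>lborel) + (\<integral>z. G z \<partial>lborel)"
    unfolding eqG by (rule Bochner_Integration.integral_add[OF Ri Gi])
  have T0: "T > 0" using T by auto
  have p5: "d - 5 < -1" using d4 by simp
  have tailI: "integrable lborel (\<lambda>z. M * (indicator {T<..} z * z powr (d-5)))"
    using powr_tail(1)[OF p5 T0] by simp
  have tailV: "(\<integral>z. M * (indicator {T<..} z * z powr (d-5)) \<partial>lborel) = M * T powr (d - 4) / (4 - d)"
    using powr_tail(2)[OF p5 T0] d4 by (simp add: divide_simps) (simp add: algebra_simps)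
  have Gb: "\<bar>\<integral>z. G z \<partial>lborel\<bar> \<le> M * T powr (d - 4) / (4 - d)"
  proof -
    have "\<bar>\<integral>z. G z \<partial>lborel\<bar> \<le> (\<integral>z. M * (indicator {T<..} z * z powr (d-5)) \<partial>lborel)"
    proof (rule integral_abs_bound_integral[OF Gi tailI])
      fix z :: real
      show "\<bar>G z\<bar> \<le> M * (indicator {T<..} z * z powr (d-5))"
      proof (cases "z > T")
        case True
        then have z0: "z > 0" using T by auto
        have "\<bar>G z\<bar> = z powr d * \<bar>phi b z - Q b z\<bar>" using True by (simp add: G_def abs_mult)
        also have "\<dots> \<le> z powr d * (M / z^5)" by (intro mult_left_mono Mb z0) auto
        also have "\<dots> = M * z powr (d-5)"
        proof -
          have "z powr (d-5) = z powr d / z powr 5" using z0 by (simp add: powr_diff)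
          also have "z powr 5 = z^5" using z0 by (simp add: powr_numeral)
          finally show ?thesis by simp
        qed
        finally show ?thesis using True by simp
      qed (simp add: G_def)
    qed
    then show ?thesis using tailV by simp
  qed
  have "tri_integral b T - ((\<integral>z. indicator {0<..T} z * (z powr d * S z) \<partial>lborel) + C
            - (\<integral>z. indicator {T<..} z * (z powr d * (Q b z - S z)) \<partial>lborel)) = - (\<integral>z. G z \<partial>lborel)"
    unfolding tri CF FBv by simp
  then show ?thesis using Gb by simp
qed


lemma zpow:
  fixes z d :: real and k :: nat
  assumes "z > 0"
  shows "z powr (d - real k) = z powr d / z^k"
  using assms by (simp add: powr_diff powr_realpow)

lemma Qpow:
  fixes z d b :: real
  assumes z: "z > 0"
  shows "z powr d * Q b z = z powr (d-1) - b * z powr (d-2) + b*(b-1) * z powr (d-3) - b*(b-1)*(b-2) * z powr (d-4)"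
proof -
  have e1: "z powr (d-1) = z powr d / z^1" using zpow[OF z, of d 1] by simp
  have e2: "z powr (d-2) = z powr d / z^2" using zpow[OF z, of d 2] by simp
  have e3: "z powr (d-3) = z powr d / z^3" using zpow[OF z, of d 3] by simp
  have e4: "z powr (d-4) = z powr d / z^4" using zpow[OF z, of d 4] by simp
  show ?thesis unfolding e1 e2 e3 e4 Q_def using z by (simp add: field_simps)
qed

lemma tailc:
  fixes T p c :: real
  assumes "T > 0" "p < -1"
  shows "integrable lborel (\<lambda>z. indicator {T<..} z * (c * z powr p))"
        "(\<integral>z. indicator {T<..} z * (c * z powr p) \<partial>lborel) = c * (- (T powr (p+1)) / (p+1))"
proof -
  have eq: "(\<lambda>z. indicator {T<..} z * (c * z powr p)) = (\<lambda>z. c * (indicator {T<..} z * z powr p))"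
    by (simp add: fun_eq_iff mult_ac)
  show "integrable lborel (\<lambda>z. indicator {T<..} z * (c * z powr p))"
    unfolding eq using powr_tail(1)[OF assms(2,1)] by simp
  show "(\<integral>z. indicator {T<..} z * (c * z powr p) \<partial>lborel) = c * (- (T powr (p+1)) / (p+1))"
    unfolding eq using powr_tail(2)[OF assms(2,1)] by simp
qed

lemma headc:
  fixes T p c :: real
  assumes "T \<ge> 0" "p > -1"
  shows "integrable lborel (\<lambda>z. indicator {0<..T} z * (c * z powr p))"
        "(\<integral>z. indicator {0<..T} z * (c * z powr p) \<partial>lborel) = c * (T powr (p+1) / (p+1))"
proof -
  have eq: "(\<lambda>z. indicator {0<..T} z * (c * z powr p)) = (\<lambda>z. c * (indicator {0<..T} z * z powr p))"
    by (simp add: fun_eq_iff mult_ac)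
  show "integrable lborel (\<lambda>z. indicator {0<..T} z * (c * z powr p))"
    unfolding eq using powr_head(1)[OF assms(2,1)] by simp
  show "(\<integral>z. indicator {0<..T} z * (c * z powr p) \<partial>lborel) = c * (T powr (p+1) / (p+1))"
    unfolding eq using powr_head(2)[OF assms(2,1)] by simp
qed

lemma integral_add4:
  fixes f1 f2 f3 f4 :: "real \<Rightarrow> real"
  assumes "integrable M f1" "integrable M f2" "integrable M f3" "integrable M f4"
  shows "(\<integral>x. f1 x + f2 x + f3 x + f4 x \<partial>M) = (\<integral>x. f1 x \<partial>M) + (\<integral>x. f2 x \<partial>M) + (\<integral>x. f3 x \<partial>M) + (\<integral>x. f4 x \<partial>M)"
  using assms by (simp add: Bochner_Integration.integral_add Bochner_Integration.integrable_add)

lemma integral_add2: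
  fixes f1 f2 :: "real \<Rightarrow> real"
  assumes "integrable M f1" "integrable M f2"
  shows "(\<integral>x. f1 x + f2 x \<partial>M) = (\<integral>x. f1 x \<partial>M) + (\<integral>x. f2 x \<partial>M)"
  using assms by (simp add: Bochner_Integration.integral_add)

lemma integral_add3:
  fixes f1 f2 f3 :: "real \<Rightarrow> real"
  assumes "integrable M f1" "integrable M f2" "integrable M f3"
  shows "(\<integral>x. f1 x + f2 x + f3 x \<partial>M) = (\<integral>x. f1 x \<partial>M) + (\<integral>x. f2 x \<partial>M) + (\<integral>x. f3 x \<partial>M)"
  using assms by (simp add: Bochner_Integration.integral_add Bochner_Integration.integrable_add)

definition Pf :: "real \<Rightarrow> real \<Rightarrow> real" where
  "Pf b T = T powr (2*b+1) / (2*b+1) - 1/2 * T powr ((2*b+1) - 1)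
            + b * (b - 1) / ((2*b+1) - 2) * T powr ((2*b+1) - 2)
            - b * (b - 2) / 2 * T powr ((2*b+1) - 3)"

definition Cb :: "real \<Rightarrow> real" where
  "Cb b = - (Gamma (1 + b))\<^sup>2 / (2 * cos (b * pi))"

lemma coefs:
  fixes b d T :: real
  assumes d: "d = 2*b+1" and b: "b \<noteq> 0" "b \<noteq> 1" "b \<noteq> -1/2" "b \<noteq> 1/2"
  shows "1 * (- (T powr (d-1+1)) / (d-1+1)) = - (T powr d / d)"
    "(-b) * (- (T powr (d-2+1)) / (d-2+1)) = 1/2 * T powr (d-1)"
    "(b*(b-1)) * (- (T powr (d-3+1)) / (d-3+1)) = - (b*(b-1)/(d-2) * T powr (d-2))"
    "(-(b*(b-1)*(b-2))) * (- (T powr (d-4+1)) / (d-4+1)) = b*(b-2)/2 * T powr (d-3)"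
    "1 * (T powr (d-1+1) / (d-1+1)) = T powr d / d"
    "(-b) * (T powr (d-2+1) / (d-2+1)) = - (1/2 * T powr (d-1))"
    "Pf b T = T powr d / d - 1/2 * T powr (d-1) + b*(b-1)/(d-2) * T powr (d-2) - b*(b-2)/2 * T powr (d-3)"
proof -
  have e1: "d-1+1 = d" "d-2+1 = d-1" "d-3+1 = d-2" "d-4+1 = d-3" by simp_all
  have e2: "d - 1 = 2*b" "d - 3 = 2*(b-1)" using d by simp_all
  show "1 * (- (T powr (d-1+1)) / (d-1+1)) = - (T powr d / d)" unfolding e1 by simp
  show "(-b) * (- (T powr (d-2+1)) / (d-2+1)) = 1/2 * T powr (d-1)" unfolding e1 using b
    by (simp add: e2)
  show "(b*(b-1)) * (- (T powr (d-3+1)) / (d-3+1)) = - (b*(b-1)/(d-2) * T powr (d-2))" unfolding e1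
    by simp
  show "(-(b*(b-1)*(b-2))) * (- (T powr (d-4+1)) / (d-4+1)) = b*(b-2)/2 * T powr (d-3)"
  proof -
    have "b - 1 \<noteq> 0" using b by simp
    then have "(-(b*(b-1)*(b-2))) * (- X / (2*(b-1))) = b*(b-2)/2 * X" for X
      by (simp add: field_simps)
    from this[of "T powr (d-3)"] show ?thesis unfolding e1 e2(2)[symmetric] by simp
  qed
  show "1 * (T powr (d-1+1) / (d-1+1)) = T powr d / d" unfolding e1 by simp
  show "(-b) * (T powr (d-2+1) / (d-2+1)) = - (1/2 * T powr (d-1))" unfolding e1 using b
    by (simp add: e2)
  show "Pf b T = T powr d / d - 1/2 * T powr (d-1) + b*(b-1)/(d-2) * T powr (d-2) - b*(b-2)/2 * T powr (d-3)"
    unfolding Pf_def d ..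
qed

lemma regime0:
  fixes b M T :: real
  assumes b: "-1 < b" "b < -1/2" and T: "T \<ge> 1"
    and M0: "M \<ge> 0" and Mb: "\<And>z. z > 0 \<Longrightarrow> \<bar>phi b z - Q b z\<bar> \<le> M / z^5"
  shows "\<bar>tri_integral b T - (Cb b + Pf b T)\<bar> \<le> M * T powr ((2*b+1) - 4) / (4 - (2*b+1))"
proof -
  define d where "d = 2*b+1"
  have d: "d < 0" "d > -1" using b by (auto simp: d_def)
  have T0: "T > 0" using T by auto
  have dd: "(2*b+2)-1 = d" by (simp add: d_def)
  have Mi: "integrable lborel (\<lambda>z. indicator {0<..} z * z powr d * (phi b z - 0))"
    using mellin_regime0(1)[OF b, unfolded dd] by simp
  have Mv: "(\<integral>z. indicator {0<..} z * z powr d * (phi b z - 0) \<partial>lborel) = Cb b"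
    using mellin_regime0(2)[OF b, unfolded dd] const_formula[of b] b by (simp add: Cb_def)
  have Si: "integrable lborel (\<lambda>z. indicator {0<..T} z * (z powr d * 0))" by simp
  have Req: "(\<lambda>z. indicator {T<..} z * (z powr d * (Q b z - 0))) =
     (\<lambda>z. indicator {T<..} z * (1 * z powr (d-1)) + indicator {T<..} z * ((-b) * z powr (d-2))
        + indicator {T<..} z * ((b*(b-1)) * z powr (d-3)) + indicator {T<..} z * ((-(b*(b-1)*(b-2))) * z powr (d-4)))"
  proof
    fix z :: real
    show "indicator {T<..} z * (z powr d * (Q b z - 0)) =
      indicator {T<..} z * (1 * z powr (d-1)) + indicator {T<..} z * ((-b) * z powr (d-2))
        + indicator {T<..} z * ((b*(b-1)) * z powr (d-3)) + indicator {T<..} z * ((-(b*(b-1)*(b-2))) * z powr (d-4))"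
    proof (cases "z > T")
      case True then have "z > 0" using T by auto
      then show ?thesis using True Qpow[of z d b] by (simp add: algebra_simps)
    qed simp
  qed
  have p: "d - 1 < -1" "d - 2 < -1" "d - 3 < -1" "d - 4 < -1" using d by auto
  note t1 = tailc[OF T0 p(1)] and t2 = tailc[OF T0 p(2)] and t3 = tailc[OF T0 p(3)] and t4 = tailc[OF T0 p(4)]
  have Ri: "integrable lborel (\<lambda>z. indicator {T<..} z * (z powr d * (Q b z - 0)))"
    unfolding Req by (intro Bochner_Integration.integrable_add t1(1) t2(1) t3(1) t4(1))
  have Rv: "(\<integral>z. indicator {T<..} z * (z powr d * (Q b z - 0)) \<partial>lborel) =
       1 * (- (T powr (d-1+1)) / (d-1+1)) + (-b) * (- (T powr (d-2+1)) / (d-2+1))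
       + (b*(b-1)) * (- (T powr (d-3+1)) / (d-3+1)) + (-(b*(b-1)*(b-2))) * (- (T powr (d-4+1)) / (d-4+1))"
    unfolding Req integral_add4[OF t1(1) t2(1) t3(1) t4(1)] t1(2) t2(2) t3(2) t4(2) ..
  have d4: "d < 4" using d by auto
  from assemble[OF b(1) d_def T d4 Mi Mv Si Ri M0 Mb]
  have "\<bar>tri_integral b T - (0 + Cb b - (\<integral>z. indicator {T<..} z * (z powr d * (Q b z - 0)) \<partial>lborel))\<bar>
        \<le> M * T powr (d - 4) / (4 - d)" by simp
  moreover have "0 + Cb b - (\<integral>z. indicator {T<..} z * (z powr d * (Q b z - 0)) \<partial>lborel) = Cb b + Pf b T"
  proof -
    have b0: "b \<noteq> 0" "b \<noteq> 1" using b by auto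
    have "d - 1 = 2*b" "d - 3 = 2*(b-1)" by (simp_all add: d_def)
    then show ?thesis unfolding Rv Pf_def d_def[symmetric] using b0
      by (simp add: field_simps)
  qed
  ultimately show ?thesis by (simp add: d_def)
qed

lemma regime1:
  fixes b M T :: real
  assumes b: "-1/2 < b" "b < 0" and T: "T \<ge> 1"
    and M0: "M \<ge> 0" and Mb: "\<And>z. z > 0 \<Longrightarrow> \<bar>phi b z - Q b z\<bar> \<le> M / z^5"
  shows "\<bar>tri_integral b T - (Cb b + Pf b T)\<bar> \<le> M * T powr ((2*b+1) - 4) / (4 - (2*b+1))"
proof -
  define d where "d = 2*b+1"
  have d: "d < 1" "d > 0" using b by (auto simp: d_def)
  have b1: "b > -1" using b by auto
  have T0: "T > 0" using T by auto
  have dd: "(2*b+2)-1 = d" by (simp add: d_def)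
  have Mi: "integrable lborel (\<lambda>z. indicator {0<..} z * z powr d * (phi b z - 1/z))"
    using mellin_regime1(1)[OF b, unfolded dd] by simp
  have Mv: "(\<integral>z. indicator {0<..} z * z powr d * (phi b z - 1/z) \<partial>lborel) = Cb b"
    using mellin_regime1(2)[OF b, unfolded dd] const_formula[of b] b by (simp add: Cb_def)
  have Seq: "(\<lambda>z. indicator {0<..T} z * (z powr d * (1/z))) = (\<lambda>z. indicator {0<..T} z * (1 * z powr (d-1)))"
  proof
    fix z :: real
    show "indicator {0<..T} z * (z powr d * (1/z)) = indicator {0<..T} z * (1 * z powr (d-1))"
    proof (cases "z > 0")
      case True then show ?thesis using zpow[OF True, of d 1] by simp
    qed simp
  qed
  have ph: "d - 1 > -1" using d by auto
  note h1 = headc[OF _ ph, of T 1]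
  have Si: "integrable lborel (\<lambda>z. indicator {0<..T} z * (z powr d * (1/z)))"
    unfolding Seq using h1(1) T0 by simp
  have Sv: "(\<integral>z. indicator {0<..T} z * (z powr d * (1/z)) \<partial>lborel) = T powr d / d"
    unfolding Seq using h1(2) T0 by simp
  have Req: "(\<lambda>z. indicator {T<..} z * (z powr d * (Q b z - 1/z))) =
     (\<lambda>z. indicator {T<..} z * ((-b) * z powr (d-2))
        + indicator {T<..} z * ((b*(b-1)) * z powr (d-3)) + indicator {T<..} z * ((-(b*(b-1)*(b-2))) * z powr (d-4)))"
  proof
    fix z :: real
    show "indicator {T<..} z * (z powr d * (Q b z - 1/z)) =
      indicator {T<..} z * ((-b) * z powr (d-2))
        + indicator {T<..} z * ((b*(b-1)) * z powr (d-3)) + indicator {T<..} z * ((-(b*(b-1)*(b-2))) * z powr (d-4))"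
    proof (cases "z > T")
      case True then have z0: "z > 0" using T by auto
      then show ?thesis using True Qpow[of z d b] zpow[OF z0, of d 1] by (simp add: algebra_simps)
    qed simp
  qed
  have p: "d - 2 < -1" "d - 3 < -1" "d - 4 < -1" using d by auto
  note t2 = tailc[OF T0 p(1)] and t3 = tailc[OF T0 p(2)] and t4 = tailc[OF T0 p(3)]
  have Ri: "integrable lborel (\<lambda>z. indicator {T<..} z * (z powr d * (Q b z - 1/z)))"
    unfolding Req by (intro Bochner_Integration.integrable_add t2(1) t3(1) t4(1))
  have Rv: "(\<integral>z. indicator {T<..} z * (z powr d * (Q b z - 1/z)) \<partial>lborel) =
       (-b) * (- (T powr (d-2+1)) / (d-2+1))
       + (b*(b-1)) * (- (T powr (d-3+1)) / (d-3+1)) + (-(b*(b-1)*(b-2))) * (- (T powr (d-4+1)) / (d-4+1))"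
    unfolding Req integral_add3[OF t2(1) t3(1) t4(1)] t2(2) t3(2) t4(2) ..
  have d4: "d < 4" using d by auto
  from assemble[OF b1 d_def T d4 Mi Mv Si Ri M0 Mb]
  have "\<bar>tri_integral b T - (T powr d / d + Cb b - (\<integral>z. indicator {T<..} z * (z powr d * (Q b z - 1/z)) \<partial>lborel))\<bar>
        \<le> M * T powr (d - 4) / (4 - d)" unfolding Sv .
  moreover have "T powr d / d + Cb b - (\<integral>z. indicator {T<..} z * (z powr d * (Q b z - 1/z)) \<partial>lborel) = Cb b + Pf b T"
  proof -
    have b0: "b \<noteq> 0" "b \<noteq> 1" "b \<noteq> -1/2" "b \<noteq> 1/2" using b by auto
    note cf = coefs[OF d_def b0, of T]
    show ?thesis unfolding Rv cf by (simp add: algebra_simps)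
  qed
  ultimately show ?thesis by (simp add: d_def)
qed

lemma regime2:
  fixes b M T :: real
  assumes b: "0 < b" "b < 1/2" and T: "T \<ge> 1"
    and M0: "M \<ge> 0" and Mb: "\<And>z. z > 0 \<Longrightarrow> \<bar>phi b z - Q b z\<bar> \<le> M / z^5"
  shows "\<bar>tri_integral b T - (Cb b + Pf b T)\<bar> \<le> M * T powr ((2*b+1) - 4) / (4 - (2*b+1))"
proof -
  define d where "d = 2*b+1"
  have d: "d < 2" "d > 1" using b by (auto simp: d_def)
  have b1: "b > -1" using b by auto
  have T0: "T > 0" using T by auto
  have dd: "(2*b+2)-1 = d" by (simp add: d_def)
  have Mi: "integrable lborel (\<lambda>z. indicator {0<..} z * z powr d * (phi b z - (1/z - b/z^2)))"
    using mellin_regime2(1)[OF b, unfolded dd] by simp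
  have Mv: "(\<integral>z. indicator {0<..} z * z powr d * (phi b z - (1/z - b/z^2)) \<partial>lborel) = Cb b"
    using mellin_regime2(2)[OF b, unfolded dd] const_formula[of b] b by (simp add: Cb_def)
  have Seq: "(\<lambda>z. indicator {0<..T} z * (z powr d * (1/z - b/z^2))) =
     (\<lambda>z. indicator {0<..T} z * (1 * z powr (d-1)) + indicator {0<..T} z * ((-b) * z powr (d-2)))"
  proof
    fix z :: real
    show "indicator {0<..T} z * (z powr d * (1/z - b/z^2)) =
       indicator {0<..T} z * (1 * z powr (d-1)) + indicator {0<..T} z * ((-b) * z powr (d-2))"
    proof (cases "z > 0")
      case True then show ?thesis using zpow[OF True, of d 1] zpow[OF True, of d 2]
        by (simp add: algebra_simps)
    qed simp
  qed
  have ph: "d - 1 > -1" "d - 2 > -1" using d by auto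
  note h1 = headc[OF _ ph(1), of T 1] and h2 = headc[OF _ ph(2), of T "-b"]
  have Si: "integrable lborel (\<lambda>z. indicator {0<..T} z * (z powr d * (1/z - b/z^2)))"
    unfolding Seq using h1(1) h2(1) T0 by (intro Bochner_Integration.integrable_add) auto
  have Sv: "(\<integral>z. indicator {0<..T} z * (z powr d * (1/z - b/z^2)) \<partial>lborel) =
      1 * (T powr (d-1+1) / (d-1+1)) + (-b) * (T powr (d-2+1) / (d-2+1))"
  proof -
    have i1: "integrable lborel (\<lambda>z. indicator {0<..T} z * (1 * z powr (d-1)))" using h1(1) T0 by simp
    have i2: "integrable lborel (\<lambda>z. indicator {0<..T} z * ((-b) * z powr (d-2)))" using h2(1) T0 by simp
    show ?thesis unfolding Seq integral_add2[OF i1 i2] using h1(2) h2(2) T0 by simp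
  qed
  have Req: "(\<lambda>z. indicator {T<..} z * (z powr d * (Q b z - (1/z - b/z^2)))) =
     (\<lambda>z. indicator {T<..} z * ((b*(b-1)) * z powr (d-3)) + indicator {T<..} z * ((-(b*(b-1)*(b-2))) * z powr (d-4)))"
  proof
    fix z :: real
    show "indicator {T<..} z * (z powr d * (Q b z - (1/z - b/z^2))) =
      indicator {T<..} z * ((b*(b-1)) * z powr (d-3)) + indicator {T<..} z * ((-(b*(b-1)*(b-2))) * z powr (d-4))"
    proof (cases "z > T")
      case True then have z0: "z > 0" using T by auto
      then show ?thesis using True Qpow[of z d b] zpow[OF z0, of d 1] zpow[OF z0, of d 2]
        by (simp add: algebra_simps)
    qed simp
  qed
  have p: "d - 3 < -1" "d - 4 < -1" using d by auto
  note t3 = tailc[OF T0 p(1)] and t4 = tailc[OF T0 p(2)]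
  have Ri: "integrable lborel (\<lambda>z. indicator {T<..} z * (z powr d * (Q b z - (1/z - b/z^2))))"
    unfolding Req by (intro Bochner_Integration.integrable_add t3(1) t4(1))
  have Rv: "(\<integral>z. indicator {T<..} z * (z powr d * (Q b z - (1/z - b/z^2))) \<partial>lborel) =
       (b*(b-1)) * (- (T powr (d-3+1)) / (d-3+1)) + (-(b*(b-1)*(b-2))) * (- (T powr (d-4+1)) / (d-4+1))"
    unfolding Req integral_add2[OF t3(1) t4(1)] t3(2) t4(2) ..
  have d4: "d < 4" using d by auto
  from assemble[OF b1 d_def T d4 Mi Mv Si Ri M0 Mb]
  have "\<bar>tri_integral b T - (1 * (T powr (d-1+1) / (d-1+1)) + (-b) * (T powr (d-2+1) / (d-2+1)) + Cb b
        - (\<integral>z. indicator {T<..} z * (z powr d * (Q b z - (1/z - b/z^2))) \<partial>lborel))\<bar>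
        \<le> M * T powr (d - 4) / (4 - d)" unfolding Sv .
  moreover have "1 * (T powr (d-1+1) / (d-1+1)) + (-b) * (T powr (d-2+1) / (d-2+1)) + Cb b
        - (\<integral>z. indicator {T<..} z * (z powr d * (Q b z - (1/z - b/z^2))) \<partial>lborel) = Cb b + Pf b T"
  proof -
    have b0: "b \<noteq> 0" "b \<noteq> 1" "b \<noteq> -1/2" "b \<noteq> 1/2" using b by auto
    note cf = coefs[OF d_def b0, of T]
    show ?thesis unfolding Rv cf by (simp add: algebra_simps)
  qed
  ultimately show ?thesis by (simp add: d_def)
qed


lemma Gamma_affine_deriv:
  fixes x c :: real
  assumes "x \<notin> \<int>\<^sub>\<le>\<^sub>0"
  shows "((\<lambda>e. Gamma (x + c*e)) has_real_derivative (Gamma x * Digamma x) * c) (at 0)"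
proof (rule DERIV_chain2[of Gamma _ "\<lambda>e. x + c*e"])
  show "(Gamma has_real_derivative Gamma x * Digamma x) (at (x + c*0))"
    using has_field_derivative_Gamma[OF assms] by simp
  show "((\<lambda>e. x + c*e) has_real_derivative c) (at 0)"
    by (auto intro!: derivative_eq_intros)
qed
lemma nn1: "(1::real) \<notin> \<int>\<^sub>\<le>\<^sub>0" by (auto elim!: nonpos_Ints_cases)
lemma nn2: "(1/2::real) \<notin> \<int>\<^sub>\<le>\<^sub>0" by (auto elim!: nonpos_Ints_cases)
lemma gamma_half_deriv:
  "((\<lambda>e::real. Gamma (1 + (-1)*e) * Gamma (1 + 1*e) * Gamma (1/2) / Gamma (1/2 + 1*e)) has_real_derivative
      (2 * ln 2 + euler_mascheroni)) (at 0)"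
proof -
  have g: "Gamma (1/2::real) > 0" by (rule Gamma_real_pos) (simp add: field_simps)
  note a = Gamma_affine_deriv[OF nn1, of "-1"] and b = Gamma_affine_deriv[OF nn1, of 1]
     and c = Gamma_affine_deriv[OF nn2, of 1]
  note m1 = DERIV_mult[OF a b]
  note m2 = DERIV_mult[OF m1 DERIV_const[of "Gamma (1/2)"]]
  have ne: "Gamma (1/2 + 1*(0::real)) \<noteq> 0" using nn2 by (simp add: Gamma_eq_zero_iff)
  note q = DERIV_divide[OF m2 c ne]
  have g': "Gamma (1/2::real) \<noteq> 0" using nn2 by (simp add: Gamma_eq_zero_iff)
  show ?thesis
    by (rule DERIV_cong[OF q]) (use g' in \<open>simp add: Digamma_one_half field_simps\<close>)
qed

lemma Rlim: "((\<lambda>e::real. Gamma (1-e) * Beta e (1/2) - 1/e) \<longlongrightarrow> 2*ln 2 + euler_mascheroni) (at_right 0)"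
proof -
  define f where "f = (\<lambda>e::real. Gamma (1 + (-1)*e) * Gamma (1 + 1*e) * Gamma (1/2) / Gamma (1/2 + 1*e))"
  have g': "Gamma (1/2::real) \<noteq> 0" using nn2 by (simp add: Gamma_eq_zero_iff)
  have f0: "f 0 = 1" using g' by (simp add: f_def)
  have "((\<lambda>h. (f (0 + h) - f 0) / h) \<longlongrightarrow> 2*ln 2 + euler_mascheroni) (at 0)"
    using gamma_half_deriv unfolding f_def DERIV_def .
  then have "((\<lambda>h. (f (0 + h) - f 0) / h) \<longlongrightarrow> 2*ln 2 + euler_mascheroni) (at_right 0)"
    by (rule tendsto_mono[OF at_within_le_at])
  then have L: "((\<lambda>h. (f h - 1) / h) \<longlongrightarrow> 2*ln 2 + euler_mascheroni) (at_right 0)"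
    unfolding f0 by simp
  have ev: "eventually (\<lambda>e. (f e - 1) / e = Gamma (1-e) * Beta e (1/2) - 1/e) (at_right 0)"
    unfolding eventually_at_right_field
  proof (rule exI[of _ 1], intro conjI allI impI)
    show "(0::real) < 1" by simp
    fix e :: real assume e: "0 < e" "e < 1"
    have ne: "e \<notin> \<int>\<^sub>\<le>\<^sub>0" using e by (auto elim!: nonpos_Ints_cases)
    have ge: "Gamma (1+e) = e * Gamma e" using Gamma_plus1[OF ne] by (simp add: add.commute)
    have nh: "Gamma (1/2 + e) \<noteq> 0"
    proof -
      have "1/2 + e > 0" using e by simp
      then have p: "0 < Gamma (1/2 + e)" by (rule Gamma_real_pos)
      then show ?thesis by (metis less_irrefl)
    qed
    show "(f e - 1) / e = Gamma (1-e) * Beta e (1/2) - 1/e"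
      unfolding f_def Beta_altdef rGamma_inverse_Gamma using e nh ge
      by (simp add: field_simps add.commute)
  qed
  show ?thesis using tendsto_cong[OF ev] L by simp
qed


lemma phi_le_H:
  assumes b: "b > -1" and z: "z \<ge> 0"
  shows "phi b z \<le> (\<integral>t. h0 b t \<partial>lborel)"
  unfolding phi_def
proof (rule integral_mono[OF phi_integrable[OF b z] h0_integrable[OF b]])
  fix t :: real
  show "exp (-(z*t)) * h0 b t \<le> h0 b t"
  proof (cases "0 < t \<and> t < 1")
    case True
    then have "exp (-(z*t)) \<le> 1" using z by auto
    then show ?thesis using h0_nonneg[of b t] by (simp add: mult_left_le_one_le)
  qed (auto simp: h0_def)
qed

lemma Q_half_bound:
  fixes z :: real assumes z: "z \<ge> 1"
  shows "\<bar>Q (-1/2) z - 1/z\<bar> \<le> 4 / z^2"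
proof -
  have z0: "z > 0" using z by auto
  have eq: "Q (-1/2) z - 1/z = 1/2 * (1/z^2) + 3/4 * (1/z^3) + 15/8 * (1/z^4)"
    unfolding Q_def by (simp add: field_simps)
  have B: "1/z^3 \<le> 1/z^2" "1/z^4 \<le> 1/z^2" using z
    by (auto intro!: divide_left_mono power_increasing simp: power_le_one)
  have P: "0 \<le> 1/z^3" "0 \<le> 1/z^4" using z0 by auto
  have key: "\<And>A B C::real. 0 \<le> B \<Longrightarrow> B \<le> A \<Longrightarrow> 0 \<le> C \<Longrightarrow> C \<le> A \<Longrightarrow>
      \<bar>1/2*A + 3/4*B + 15/8*C\<bar> \<le> 4*A"
    by (subst abs_of_nonneg) linarith+
  have "\<bar>Q (-1/2) z - 1/z\<bar> \<le> 4 * (1/z^2)" unfolding eq by (rule key[OF P(1) B(1) P(2) B(2)])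
  then show ?thesis by simp
qed

lemma Chalf:
  shows "integrable lborel (\<lambda>z. indicator {0<..} z * z powr 0 * (phi (-1/2) z - indicator {1..} z / z))"
    "(\<integral>z. indicator {0<..} z * z powr 0 * (phi (-1/2) z - indicator {1..} z / z) \<partial>lborel)
       = 2*ln 2 + euler_mascheroni"
proof -
  define b :: real where "b = -1/2"
  have b1: "b > -1" by (simp add: b_def)
  obtain M where M0: "M \<ge> 0" and Mb: "\<And>z. z > 0 \<Longrightarrow> \<bar>phi b z - Q b z\<bar> \<le> M / z^5"
    using phi_asym[OF b1] by blast
  define H where "H = (\<integral>t. h0 b t \<partial>lborel)"
  have H0: "H \<ge> 0" unfolding H_def by (rule integral_nonneg_AE) (auto intro!: AE_I2 h0_nonneg)
  define M' where "M' = M + 4"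
  have M'0: "M' \<ge> 0" using M0 by (simp add: M'_def)
  have bnd1: "\<bar>phi b z - 1/z\<bar> \<le> M' / z^2" if z: "z \<ge> 1" for z
  proof -
    have z0: "z > 0" using z by auto
    have "M / z^5 \<le> M / z^2" using z M0
      by (intro divide_left_mono power_increasing) auto
    moreover have "\<bar>Q b z - 1/z\<bar> \<le> 4 / z^2" unfolding b_def by (rule Q_half_bound[OF z])
    moreover have "\<bar>phi b z - 1/z\<bar> \<le> \<bar>phi b z - Q b z\<bar> + \<bar>Q b z - 1/z\<bar>" by linarith
    ultimately have "\<bar>phi b z - 1/z\<bar> \<le> M / z^2 + 4 / z^2" using Mb[OF z0] by linarith
    then show ?thesis by (simp add: M'_def add_divide_distrib)
  qed
  define F where "F = (\<lambda>w z::real. indicator {0<..} z * z powr (w-1) * (phi b z - indicator {1..} z / z))"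
  define g where "g = (\<lambda>z::real. indicator {0<..1} z * (H * z powr (-1/2)) + indicator {1..} z * (M' * z powr (-2)))"
  have gi: "integrable lborel g"
  proof -
    have e: "g = (\<lambda>z. H * (indicator {0<..1} z * z powr (-1/2)) + M' * (indicator {1..} z * z powr (-2)))"
      by (simp add: g_def fun_eq_iff mult_ac)
    show ?thesis unfolding e
      using powr_head(1)[of "-1/2" 1] powr_tail'(1)[of "-2" 1]
      by (intro Bochner_Integration.integrable_add integrable_mult_right) auto
  qed
  have g0: "g z \<ge> 0" for z unfolding g_def using H0 M'0 by (auto intro!: add_nonneg_nonneg mult_nonneg_nonneg)
  have bound: "\<bar>F w z\<bar> \<le> g z" if w: "1/2 \<le> w" "w \<le> 1" for w z
  proof -
    consider "z \<le> 0" | "0 < z \<and> z < 1" | "1 \<le> z" by linarith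
    then show ?thesis
    proof cases
      case 1 then show ?thesis using g0[of z] by (simp add: F_def)
    next
      case 2
      then have "0 \<le> phi b z" "phi b z \<le> H" using phi_nonneg[of b z] phi_le_H[OF b1, of z] by (auto simp: H_def)
      moreover have "z powr (w-1) \<le> z powr (-1/2)" using 2 w by (intro powr_mono') auto
      ultimately have "z powr (w-1) * phi b z \<le> z powr (-1/2) * H"
        by (intro mult_mono) auto
      moreover have "\<bar>F w z\<bar> = z powr (w-1) * phi b z" using 2 phi_nonneg[of b z]
        by (simp add: F_def abs_mult)
      moreover have "g z = H * z powr (-1/2)" using 2 by (simp add: g_def)
      ultimately show ?thesis by (simp add: mult_ac)
    next
      case 3
      then have z0: "z > 0" by auto
      have "z powr (w-1) \<le> z powr 0" using 3 w by (intro powr_mono) auto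
      then have p1: "z powr (w-1) \<le> 1" using z0 by simp
      have "\<bar>F w z\<bar> = z powr (w-1) * \<bar>phi b z - 1/z\<bar>" using 3 z0 by (simp add: F_def abs_mult)
      also have "\<dots> \<le> 1 * (M' / z^2)"
        using p1 bnd1[OF 3] by (intro mult_mono) auto
      also have "\<dots> = M' * z powr (-2)"
      proof -
        have "z powr (-2) = inverse (z powr 2)" by (rule powr_minus)
        also have "z powr 2 = z^2" using z0 by simp
        finally show ?thesis by (simp add: divide_inverse)
      qed
      also have "\<dots> \<le> g z"
      proof -
        have "0 \<le> indicator {0<..1} z * (H * z powr (-1/2))" using H0 by auto
        then show ?thesis using 3 by (simp add: g_def)
      qed
      finally show ?thesis .
    qed
  qed
  have Fm: "F w \<in> borel_measurable lborel" for w unfolding F_def by measurable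
  have F1i: "integrable lborel (F 1)"
    by (rule Bochner_Integration.integrable_bound[OF gi Fm]) (use bound g0 in \<open>auto intro!: AE_I2\<close>)
  have Fv: "integrable lborel (F w) \<and> (\<integral>z. F w z \<partial>lborel) = Gamma w * Beta (1-w) (1/2) - 1/(1-w)"
    if w: "0 < w" "w < 1" for w
  proof -
    have eq: "F w = (\<lambda>z. indicator {0<..} z * z powr (w-1) * phi b z - indicator {1..} z * z powr (w-2))"
    proof
      fix z :: real
      show "F w z = indicator {0<..} z * z powr (w-1) * phi b z - indicator {1..} z * z powr (w-2)"
      proof (cases "z \<ge> 1")
        case True
        then have z0: "z > 0" by auto
        have "z powr (w-2) = z powr ((w-1) - 1)" by simp
        also have "\<dots> = z powr (w-1) / z powr 1" by (rule powr_diff)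
        finally have "z powr (w-2) = z powr (w-1) / z" using z0 by simp
        then show ?thesis using True z0 by (simp add: F_def algebra_simps)
      qed (simp add: F_def)
    qed
    have m0: "0 < w" "w < 1" using w by auto
    note A = mellin0[OF m0 b1]
    have bb: "b + 1 = 1/2" by (simp add: b_def)
    have p: "w - 2 < -1" using w by simp
    note B = powr_tail'[OF p, of 1]
    have Bv: "(\<integral>z. indicator {1..} z * z powr (w-2) \<partial>lborel) = 1/(1-w)"
      using B(2) w by (simp add: divide_simps) argo
    show ?thesis unfolding eq using A B(1) Bv
      by (simp add: Bochner_Integration.integral_diff Bochner_Integration.integrable_diff bb)
  qed
  define e where "e = (\<lambda>n::nat. 1 / (real n + 2))"
  have e0: "0 < e n" "e n < 1" for n by (simp_all add: e_def divide_simps)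
  have elim: "filterlim e (at_right 0) sequentially" unfolding e_def by real_asymp
  have wlim: "(\<lambda>n. 1 - e n) \<longlonglongrightarrow> 1" unfolding e_def by real_asymp
  have lim1: "(\<lambda>n. \<integral>z. F (1 - e n) z \<partial>lborel) \<longlonglongrightarrow> 2*ln 2 + euler_mascheroni"
  proof -
    have "(\<lambda>n. Gamma (1 - e n) * Beta (e n) (1/2) - 1 / e n) \<longlonglongrightarrow> 2*ln 2 + euler_mascheroni"
      by (rule filterlim_compose[OF Rlim elim])
    moreover have "(\<integral>z. F (1 - e n) z \<partial>lborel) = Gamma (1 - e n) * Beta (e n) (1/2) - 1 / e n" for n
      using Fv[of "1 - e n"] e0[of n] by simp
    ultimately show ?thesis by simp
  qed
  have lim2: "(\<lambda>n. \<integral>z. F (1 - e n) z \<partial>lborel) \<longlonglongrightarrow> (\<integral>z. F 1 z \<partial>lborel)"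
  proof (rule integral_dominated_convergence[OF Fm _ gi])
    show "\<And>n. F (1 - e n) \<in> borel_measurable lborel" by (rule Fm)
    show "AE z in lborel. (\<lambda>n. F (1 - e n) z) \<longlonglongrightarrow> F 1 z"
    proof (rule AE_I2)
      fix z :: real
      show "(\<lambda>n. F (1 - e n) z) \<longlonglongrightarrow> F 1 z"
      proof (cases "z > 0")
        case True
        have "(\<lambda>n. z powr ((1 - e n) - 1)) \<longlonglongrightarrow> z powr (1 - 1)"
          using True by (intro tendsto_intros wlim) auto
        then show ?thesis unfolding F_def by (intro tendsto_mult tendsto_const)
      qed (simp add: F_def)
    qed
    show "\<And>n. AE z in lborel. norm (F (1 - e n) z) \<le> g z"
      using bound e0 by (auto intro!: AE_I2 simp: e_def divide_simps)
  qed
  have val: "(\<integral>z. F 1 z \<partial>lborel) = 2*ln 2 + euler_mascheroni"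
    using LIMSEQ_unique[OF lim2 lim1] .
  show "integrable lborel (\<lambda>z. indicator {0<..} z * z powr 0 * (phi (-1/2) z - indicator {1..} z / z))"
    using F1i by (simp add: F_def b_def)
  show "(\<integral>z. indicator {0<..} z * z powr 0 * (phi (-1/2) z - indicator {1..} z / z) \<partial>lborel)
       = 2*ln 2 + euler_mascheroni"
    using val by (simp add: F_def b_def)
qed


lemma phi0_val:
  fixes z :: real assumes z: "z > 0"
  shows "phi 0 z = (1 - exp (-z)) / z"
proof -
  have fi: "integrable lborel (\<lambda>t. exp (-(z*t)) * h0 0 t)" by (rule phi_integrable) (use z in auto)
  have "phi 0 z = integral {0..1} (\<lambda>t. exp (-(z*t)) * h0 0 t)"
    unfolding phi_def by (rule L_to_HK01[OF fi]) (auto simp: h0_def)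
  also have "\<dots> = (1 - exp (-z)) / z"
  proof (rule integral_unique)
    have ftc: "((\<lambda>t. exp (-(z*t))) has_integral ((- exp (-(z*1)) / z) - (- exp (-(z*0)) / z))) {0..1}"
    proof (rule fundamental_theorem_of_calculus)
      show "(0::real) \<le> 1" by simp
      fix t :: real assume "t \<in> {0..1}"
      show "((\<lambda>t. - exp (-(z*t)) / z) has_vector_derivative exp (-(z*t))) (at t within {0..1})"
        unfolding has_real_derivative_iff_has_vector_derivative[symmetric]
        using z by (auto intro!: derivative_eq_intros)
    qed
    have "((\<lambda>t. exp (-(z*t))) has_integral (1 - exp (-z)) / z) (cbox 0 1)"
      using ftc by (simp add: diff_divide_distrib)
    then have "((\<lambda>t. exp (-(z*t)) * h0 0 t) has_integral (1 - exp (-z)) / z) (cbox 0 1)"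
      by (rule has_integral_spike_interior) (auto simp: h0_def)
    then show "((\<lambda>t. exp (-(z*t)) * h0 0 t) has_integral (1 - exp (-z)) / z) {0..1}" by simp
  qed
  finally show ?thesis .
qed

lemma zero_bound:
  fixes M T :: real
  assumes T: "T \<ge> 1" and M0: "M \<ge> 0" and Mb: "\<And>z. z > 0 \<Longrightarrow> \<bar>phi 0 z - Q 0 z\<bar> \<le> M / z^5"
  shows "\<bar>tri_integral 0 T - (T - 1)\<bar> \<le> M * T powr (1 - 4) / (4 - 1)"
proof -
  have T0: "T > 0" using T by auto
  have eqM: "(\<lambda>z. indicator {0<..} z * z powr 1 * (phi 0 z - 1/z)) = (\<lambda>z. (-1) * (indicator {0<..} z * exp (-(1*z))))"
  proof
    fix z :: real
    show "indicator {0<..} z * z powr 1 * (phi 0 z - 1/z) = (-1) * (indicator {0<..} z * exp (-(1*z)))"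
    proof (cases "z > 0")
      case True
      have p: "z * phi 0 z = 1 - exp (-z)" using phi0_val[OF True] True by simp
      have "z powr 1 * (phi 0 z - 1/z) = z * phi 0 z - 1" using True by (simp add: right_diff_distrib)
      then show ?thesis using True p by simp
    qed simp
  qed
  have Mi: "integrable lborel (\<lambda>z. indicator {0<..} z * z powr 1 * (phi 0 z - 1/z))"
    unfolding eqM using lap0[of 1] by simp
  have Mv: "(\<integral>z. indicator {0<..} z * z powr 1 * (phi 0 z - 1/z) \<partial>lborel) = -1"
    unfolding eqM using lap0v[of 1] by simp
  have Seq: "(\<lambda>z. indicator {0<..T} z * (z powr 1 * (1/z))) = (\<lambda>z. indicator {0<..T} z * (1 * z powr 0))"
    by (auto simp: fun_eq_iff indicator_def)
  have Si: "integrable lborel (\<lambda>z. indicator {0<..T} z * (z powr 1 * (1/z)))"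
    unfolding Seq using headc(1)[of T 0 1] T0 by simp
  have Sv: "(\<integral>z. indicator {0<..T} z * (z powr 1 * (1/z)) \<partial>lborel) = T"
    unfolding Seq using headc(2)[of T 0 1] T0 by simp
  have Req: "(\<lambda>z. indicator {T<..} z * (z powr 1 * (Q 0 z - 1/z))) = (\<lambda>z. 0)"
    by (simp add: fun_eq_iff Q_def)
  have Ri: "integrable lborel (\<lambda>z. indicator {T<..} z * (z powr 1 * (Q 0 z - 1/z)))"
    unfolding Req by simp
  have d: "(1::real) = 2*0+1" by simp
  have d4: "(1::real) < 4" by simp
  from assemble[OF _ d T d4 Mi Mv Si Ri M0 Mb]
  show ?thesis unfolding Sv Req by simp
qed

lemma abs_shift: "\<bar>(X::real) + c\<bar> \<le> m \<Longrightarrow> 0 \<le> c \<Longrightarrow> \<bar>X\<bar> \<le> c + m"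
  by linarith

lemma half_bound:
  fixes M T :: real
  assumes T: "T \<ge> 1" and M0: "M \<ge> 0" and Mb: "\<And>z. z > 0 \<Longrightarrow> \<bar>phi (-1/2) z - Q (-1/2) z\<bar> \<le> M / z^5"
  shows "\<bar>tri_integral (-1/2) T - (ln T + 2 * ln 2 + euler_mascheroni - 1 / (2 * T) - 3 / (8 * T\<^sup>2))\<bar>
          \<le> (5/8 + M/4) * T powr (-3)"
proof -
  define b :: real where "b = -1/2"
  have T0: "T > 0" using T by auto
  note Mi = Chalf(1) and Mv = Chalf(2)
  have Seq: "(\<lambda>z. indicator {0<..T} z * (z powr 0 * (indicator {1..} z / z))) = (\<lambda>z. indicator {1..T} z * (1/z))"
    using T by (auto simp: fun_eq_iff indicator_def)
  have hk: "((\<lambda>z. 1/z) has_integral (ln T - ln 1)) {1..T}"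
  proof (rule fundamental_theorem_of_calculus)
    show "1 \<le> T" by (rule T)
    fix z :: real assume "z \<in> {1..T}"
    then have "z > 0" by auto
    then show "(ln has_vector_derivative 1/z) (at z within {1..T})"
      unfolding has_real_derivative_iff_has_vector_derivative[symmetric]
      by (auto intro!: derivative_eq_intros)
  qed
  note hl = HK2L[OF hk]
  have Si: "integrable lborel (\<lambda>z. indicator {0<..T} z * (z powr 0 * (indicator {1..} z / z)))"
    unfolding Seq by (rule hl(1)) auto
  have Sv: "(\<integral>z. indicator {0<..T} z * (z powr 0 * (indicator {1..} z / z)) \<partial>lborel) = ln T"
    unfolding Seq using hl(2) by simp
  have Req: "(\<lambda>z. indicator {T<..} z * (z powr 0 * (Q (-1/2) z - indicator {1..} z / z))) =
     (\<lambda>z. indicator {T<..} z * ((1/2) * z powr (0-2))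
        + indicator {T<..} z * ((3/4) * z powr (0-3)) + indicator {T<..} z * ((15/8) * z powr (0-4)))"
  proof
    fix z :: real
    show "indicator {T<..} z * (z powr 0 * (Q (-1/2) z - indicator {1..} z / z)) =
      indicator {T<..} z * ((1/2) * z powr (0-2))
        + indicator {T<..} z * ((3/4) * z powr (0-3)) + indicator {T<..} z * ((15/8) * z powr (0-4))"
    proof (cases "z > T")
      case True then have z0: "z > 0" and z1: "z \<ge> 1" using T by auto
      have "z powr (0 - real 2) = z powr 0 / z^2" "z powr (0 - real 3) = z powr 0 / z^3" "z powr (0 - real 4) = z powr 0 / z^4"
        using zpow[OF z0] by blast+
      then have e: "z powr (0-2) = 1 / z^2" "z powr (0-3) = 1 / z^3" "z powr (0-4) = 1 / z^4" using z0 by simp_all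
      show ?thesis unfolding e using True z0 z1 by (simp add: Q_def field_simps)
    qed simp
  qed
  have p: "(0::real) - 2 < -1" "(0::real) - 3 < -1" "(0::real) - 4 < -1" by auto
  note t2 = tailc[OF T0 p(1)] and t3 = tailc[OF T0 p(2)] and t4 = tailc[OF T0 p(3)]
  have Ri: "integrable lborel (\<lambda>z. indicator {T<..} z * (z powr 0 * (Q (-1/2) z - indicator {1..} z / z)))"
    unfolding Req by (intro Bochner_Integration.integrable_add t2(1) t3(1) t4(1))
  have Rv: "(\<integral>z. indicator {T<..} z * (z powr 0 * (Q (-1/2) z - indicator {1..} z / z)) \<partial>lborel) =
       (1/2) * (- (T powr (0-2+1)) / (0-2+1)) + (3/4) * (- (T powr (0-3+1)) / (0-3+1)) + (15/8) * (- (T powr (0-4+1)) / (0-4+1))"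
    unfolding Req integral_add3[OF t2(1) t3(1) t4(1)] t2(2) t3(2) t4(2) ..
  have d: "(0::real) = 2*(-1/2)+1" by simp
  have d4: "(0::real) < 4" by simp
  have b1: "(-1/2::real) > -1" by simp
  from assemble[OF b1 d T d4 Mi Mv Si Ri M0 Mb]
  have A: "\<bar>tri_integral (-1/2) T - (ln T + (2*ln 2 + euler_mascheroni) -
      ((1/2) * (- (T powr (0-2+1)) / (0-2+1)) + (3/4) * (- (T powr (0-3+1)) / (0-3+1)) + (15/8) * (- (T powr (0-4+1)) / (0-4+1))))\<bar>
      \<le> M * T powr (0 - 4) / (4 - 0)" unfolding Sv Rv .
  have e1: "T powr (0-2+1) = 1/T" "T powr (0-3+1) = 1/T^2" "T powr (0-4+1) = 1/T^3" "T powr (0-4) = 1/T^4"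
    "T powr (-3) = 1/T^3"
    using T0 by (simp_all add: powr_minus divide_inverse powr_numeral)
  have "1/T^4 \<le> 1/T^3" using T by (intro divide_left_mono power_increasing) auto
  then have "M/4 * (1/T^4) \<le> M/4 * (1/T^3)" using M0 by (intro mult_left_mono) auto
  moreover have "M * (1/T^4) / 4 = M/4 * (1/T^4)" by simp
  ultimately have MM: "M * (1/T^4) / 4 \<le> M/4 * (1/T^3)" by (simp only:)
  from A MM have "\<bar>tri_integral (-1/2) T - (ln T + 2 * ln 2 + euler_mascheroni - 1 / (2 * T) - 3 / (8 * T\<^sup>2)) + 5/8 * (1/T^3)\<bar>
      \<le> M/4 * (1/T^3)"
    unfolding e1 by (simp add: field_simps power2_eq_square)
  then have "\<bar>tri_integral (-1/2) T - (ln T + 2 * ln 2 + euler_mascheroni - 1 / (2 * T) - 3 / (8 * T\<^sup>2))\<bar>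
      \<le> 5/8 * (1/T^3) + M/4 * (1/T^3)"
    by (rule abs_shift) (use T0 in simp)
  then show ?thesis unfolding e1 by (simp add: algebra_simps)
qed


lemma main_bound:
  fixes \<beta> :: real
  assumes b: "-1 < \<beta>" "\<beta> < 1/2" "\<beta> \<noteq> -1/2"
  shows "\<exists>K>0. \<forall>T\<ge>1. \<bar>tri_integral \<beta> T - (Cb \<beta> + Pf \<beta> T)\<bar> \<le> K * T powr ((2*\<beta>+1) - 4)"
proof -
  obtain M where M0: "M \<ge> 0" and Mb: "\<And>z. z > 0 \<Longrightarrow> \<bar>phi \<beta> z - Q \<beta> z\<bar> \<le> M / z^5"
    using phi_asym[OF b(1)] by blast
  define K where "K = M / (4 - (2*\<beta>+1)) + 1"
  have d4: "4 - (2*\<beta>+1) > 0" using b by simp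
  have K0: "K > 0" unfolding K_def using M0 d4 by (simp add: add_nonneg_pos)
  have "\<bar>tri_integral \<beta> T - (Cb \<beta> + Pf \<beta> T)\<bar> \<le> K * T powr ((2*\<beta>+1) - 4)" if T: "T \<ge> 1" for T
  proof -
    have B: "\<bar>tri_integral \<beta> T - (Cb \<beta> + Pf \<beta> T)\<bar> \<le> M * T powr ((2*\<beta>+1) - 4) / (4 - (2*\<beta>+1))"
    proof -
      consider "\<beta> < -1/2" | "-1/2 < \<beta> \<and> \<beta> < 0" | "\<beta> = 0" | "0 < \<beta>" using b by linarith
      then show ?thesis
      proof cases
        case 1 then show ?thesis using regime0[OF b(1) 1 T M0 Mb] by simp
      next
        case 2 then show ?thesis using regime1[OF _ _ T M0 Mb] by simp
      next
        case 3
        have T0: "T > 0" using T by simp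
        have "Cb 0 + Pf 0 T = T - 1" using T0 by (simp add: Cb_def Pf_def)
        then show ?thesis using zero_bound[OF T M0] Mb 3 by simp
      next
        case 4 then show ?thesis using regime2[OF 4 _ T M0 Mb] b by simp
      qed
    qed
    also have "\<dots> \<le> K * T powr ((2*\<beta>+1) - 4)"
    proof -
      have "M * T powr ((2*\<beta>+1) - 4) / (4 - (2*\<beta>+1)) = (M / (4 - (2*\<beta>+1))) * T powr ((2*\<beta>+1) - 4)"
        by simp
      also have "\<dots> \<le> K * T powr ((2*\<beta>+1) - 4)" unfolding K_def
        by (intro mult_right_mono) auto
      finally show ?thesis .
    qed
    finally show ?thesis .
  qed
  then show ?thesis using K0 by blast
qed

theorem lemma4p5:
  fixes \<beta> :: real
  assumes "-1 < \<beta>" and "\<beta> < 1/2"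
  defines "\<delta> \<equiv> 2 * \<beta> + 1"
  shows "(\<beta> = -1/2 \<longrightarrow>
           (\<lambda>T. tri_integral \<beta> T -
               (ln T + 2 * ln 2 + euler_mascheroni - 1 / (2 * T) - 3 / (8 * T\<^sup>2)))
             \<in> O[at_top](\<lambda>T. T powr (-3)))
       \<and> (\<beta> \<noteq> -1/2 \<longrightarrow>
           (\<lambda>T. tri_integral \<beta> T -
               (- (Gamma (1 + \<beta>))\<^sup>2 / (2 * cos (\<beta> * pi)) + T powr \<delta> / \<delta>
                - 1/2 * T powr (\<delta> - 1)
                + \<beta> * (\<beta> - 1) / (\<delta> - 2) * T powr (\<delta> - 2)
                - \<beta> * (\<beta> - 2) / 2 * T powr (\<delta> - 3)))
             \<in> O[at_top](\<lambda>T. T powr (\<delta> - 4)))"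
proof (intro conjI impI)
  assume h: "\<beta> = -1/2"
  obtain M where M0: "M \<ge> 0" and Mb: "\<And>z. z > 0 \<Longrightarrow> \<bar>phi (-1/2) z - Q (-1/2) z\<bar> \<le> M / z^5"
    using phi_asym[of "-1/2"] by auto
  have c0: "5/8 + M/4 > 0" using M0 by simp
  have ev: "eventually (\<lambda>T. norm (tri_integral (-1/2) T -
               (ln T + 2 * ln 2 + euler_mascheroni - 1 / (2 * T) - 3 / (8 * T\<^sup>2)))
           \<le> (5/8 + M/4) * norm (T powr (-3))) at_top"
    using eventually_ge_at_top[of "1::real"]
  proof eventually_elim
    case (elim T)
    then show ?case using half_bound[OF elim M0 Mb] by simp
  qed
  show "(\<lambda>T. tri_integral \<beta> T -
               (ln T + 2 * ln 2 + euler_mascheroni - 1 / (2 * T) - 3 / (8 * T\<^sup>2)))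
             \<in> O[at_top](\<lambda>T. T powr (-3))"
    unfolding h by (rule landau_o.bigI[OF c0 ev])
next
  assume h: "\<beta> \<noteq> -1/2"
  obtain K where K0: "K > 0" and KB: "\<And>T. T \<ge> 1 \<Longrightarrow>
      \<bar>tri_integral \<beta> T - (Cb \<beta> + Pf \<beta> T)\<bar> \<le> K * T powr ((2*\<beta>+1) - 4)"
    using main_bound[OF assms(1,2) h] by blast
  have eq: "Cb \<beta> + Pf \<beta> T = - (Gamma (1 + \<beta>))\<^sup>2 / (2 * cos (\<beta> * pi)) + T powr \<delta> / \<delta>
                - 1/2 * T powr (\<delta> - 1)
                + \<beta> * (\<beta> - 1) / (\<delta> - 2) * T powr (\<delta> - 2)
                - \<beta> * (\<beta> - 2) / 2 * T powr (\<delta> - 3)" for T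
    unfolding Cb_def Pf_def \<delta>_def by simp
  have ev: "eventually (\<lambda>T. norm (tri_integral \<beta> T -
               (- (Gamma (1 + \<beta>))\<^sup>2 / (2 * cos (\<beta> * pi)) + T powr \<delta> / \<delta>
                - 1/2 * T powr (\<delta> - 1)
                + \<beta> * (\<beta> - 1) / (\<delta> - 2) * T powr (\<delta> - 2)
                - \<beta> * (\<beta> - 2) / 2 * T powr (\<delta> - 3)))
           \<le> K * norm (T powr (\<delta> - 4))) at_top"
    using eventually_ge_at_top[of "1::real"]
  proof eventually_elim
    case (elim T)
    then show ?case using KB[OF elim] unfolding eq[symmetric] by (simp add: \<delta>_def)
  qed
  show "(\<lambda>T. tri_integral \<beta> T -
               (- (Gamma (1 + \<beta>))\<^sup>2 / (2 * cos (\<beta> * pi)) + T powr \<delta> / \<delta>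
                - 1/2 * T powr (\<delta> - 1)
                + \<beta> * (\<beta> - 1) / (\<delta> - 2) * T powr (\<delta> - 2)
                - \<beta> * (\<beta> - 2) / 2 * T powr (\<delta> - 3)))
             \<in> O[at_top](\<lambda>T. T powr (\<delta> - 4))"
    by (rule landau_o.bigI[OF K0 ev])
qed


end
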